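(* Let $a>0$, $p>1$, and let $\phi\in C^1((0,a])\cap C^0([0,a])$ satisfy $\phi(0)=0$, $\phi(t)>0$ for $t\in(0,a]$, and $c_1t^{p-1+\delta}\le\phi(t)\le c_2t^{p-1+\delta}$ for all $t\in(0,a]$, for some constants $c_1,c_2,\delta>0$. Suppose moreover that $\phi$ is twice differentiable in $(0,a)$ and $(\phi'/\phi)'(t)<0$ for all $t\in(0,a)$. Let $\eta_a(t)=\phi(t)^{-\frac1{p-1}}\big/\int_t^a\phi(\sigma)^{-\frac1{p-1}}\,d\sigma$ for $t\in(0,a)$, let $T\in(0,a)$ be the unique point such that $\eta_a'<0$ on $(0,T)$ and $\eta_a'>0$ on $(T,a)$, and let $\eta_{aT}(t)=\eta_a(t)$ for $t\in(0,T]$, $\eta_{aT}(t)=\eta_a(T)$ for $t\in(T,a]$. Then for every $u\in\mathcal E$, \[ \int_0^a|u'|^p\phi\,dt\;\ge\;\left(\frac{p-1}{p}\right)^p\int_0^a|u|^p\eta_{aT}^p\phi\,dt, \] and the constant $\left(\frac{p-1}{p}\right)^p$ is sharp (it cannot be replaced by a larger constant).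
   Context: $W^{1,p}(0,a;\phi)=\{u:[0,a]\to\mathbb R:\ u\in L^1_{\mathrm{loc}}[0,a],\ \int_0^a|u'|^p\phi\,dt<\infty\}$, with $u'$ the distributional derivative (such $u$ are absolutely continuous on $[\epsilon,a]$ for each $\epsilon\in(0,a)$), and $\mathcal E=\{u\in W^{1,p}(0,a;\phi): u(a)=0\}$. *)

theory Defs
  imports "HOL-Analysis.Analysis"
begin

definition eta_a :: "(real \<Rightarrow> real) \<Rightarrow> real \<Rightarrow> real \<Rightarrow> real \<Rightarrow> real" where
  "eta_a \<phi> p a t = \<phi> t powr (-1 / (p - 1)) / integral {t..a} (\<lambda>s. \<phi> s powr (-1 / (p - 1)))"

definition eta_aT :: "(real \<Rightarrow> real) \<Rightarrow> real \<Rightarrow> real \<Rightarrow> real \<Rightarrow> real \<Rightarrow> real" where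
  "eta_aT \<phi> p a T t = (if t \<le> T then eta_a \<phi> p a t else eta_a \<phi> p a T)"

text \<open>g is the (distributional) derivative of u on (0,a]: u is absolutely continuous on
  every [x,a], 0<x, with u(y)-u(x) = int_x^y g.\<close>
definition weak_deriv_on :: "real \<Rightarrow> (real \<Rightarrow> real) \<Rightarrow> (real \<Rightarrow> real) \<Rightarrow> bool" where
  "weak_deriv_on a u g \<longleftrightarrow>
     (\<forall>x\<in>{0<..a}. g absolutely_integrable_on {x..a}) \<and>
     (\<forall>x y. 0 < x \<longrightarrow> x \<le> y \<longrightarrow> y \<le> a \<longrightarrow> u y - u x = integral {x..y} g)"

definition energy :: "real \<Rightarrow> real \<Rightarrow> (real \<Rightarrow> real) \<Rightarrow> (real \<Rightarrow> real) \<Rightarrow> ennreal" where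
  "energy a p \<phi> g = (\<integral>\<^sup>+ t \<in> {0<..<a}. ennreal (\<bar>g t\<bar> powr p * \<phi> t) \<partial>lborel)"

definition in_E :: "real \<Rightarrow> real \<Rightarrow> (real \<Rightarrow> real) \<Rightarrow> (real \<Rightarrow> real) \<Rightarrow> (real \<Rightarrow> real) \<Rightarrow> bool" where
  "in_E a p \<phi> u g \<longleftrightarrow>
     u absolutely_integrable_on {0..a} \<and> weak_deriv_on a u g \<and>
     energy a p \<phi> g < \<infinity> \<and> u a = 0"

definition weighted_rhs :: "real \<Rightarrow> real \<Rightarrow> (real \<Rightarrow> real) \<Rightarrow> (real \<Rightarrow> real) \<Rightarrow> (real \<Rightarrow> real) \<Rightarrow> ennreal" where
  "weighted_rhs a p \<phi> w u = (\<integral>\<^sup>+ t \<in> {0<..<a}. ennreal (\<bar>u t\<bar> powr p * w t powr p * \<phi> t) \<partial>lborel)"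

end

theory Submission
  imports Defs
begin



lemma young_pt:
  fixes p x w v \<mu> :: real
  assumes p: "p > 1" and x: "x \<ge> 0" and w: "w > 0" and v: "v > 0" and mu: "\<mu> > 0"
  shows "x \<le> \<mu> / p * (x powr p * w * v powr ((p-1)/p))
             + ((p-1)/p) * \<mu> powr (-1/(p-1)) * (w powr (-1/(p-1)) * v powr (-1/p))"
proof -
  define p' where "p' = p/(p-1)"
  have p'1: "p' > 1" using p by (simp add: p'_def)
  have conj: "1/p + 1/p' = 1" using p by (simp add: p'_def field_simps)
  define X where "X = \<mu> powr (1/p) * x * w powr (1/p) * v powr ((p-1)/p/p)"
  define k1 where "k1 = -1/p"
  define k2 where "k2 = -(p-1)/p/p"
  define Y where "Y = \<mu> powr k1 * w powr k1 * v powr k2"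
  have X0: "X \<ge> 0" using x by (simp add: X_def)
  have Y0: "Y \<ge> 0" by (simp add: Y_def)
  have XY: "X * Y = x"
  proof -
    have "X * Y = x * (\<mu> powr (1/p) * \<mu> powr (-1/p)) * (w powr (1/p) * w powr (-1/p))
                    * (v powr ((p-1)/p/p) * v powr (-(p-1)/p/p))"
      by (simp add: X_def Y_def k1_def k2_def algebra_simps)
    also have "... = x"
    proof -
      have z: "(p - 1) / (p * p) + (1 - p) / (p * p) = 0" by (simp add: add_divide_distrib[symmetric])
      show ?thesis using mu w v z by (simp add: powr_add[symmetric])
    qed
    finally show ?thesis .
  qed
  have Xp: "X powr p = \<mu> * (x powr p * w * v powr ((p-1)/p))"
    using mu w v x p by (simp add: X_def powr_mult powr_powr)
  have Yp: "Y powr p' = \<mu> powr (-1/(p-1)) * (w powr (-1/(p-1)) * v powr (-1/p))"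
  proof -
    have e1: "k1 * p' = -1/(p-1)" using p by (simp add: k1_def p'_def field_simps)
    have e2: "k2 * p' = -1/p" using p by (simp add: k2_def p'_def field_simps)
    have "Y powr p' = \<mu> powr (k1 * p') * w powr (k1 * p') * v powr (k2 * p')"
      using mu w v by (simp add: Y_def powr_mult powr_powr)
    then show ?thesis by (simp only: e1 e2 mult.assoc)
  qed
  have "X * Y \<le> X powr p / p + Y powr p' / p'"
    by (rule Youngs_inequality[OF p p'1 conj X0 Y0])
  also have "... = \<mu> / p * (x powr p * w * v powr ((p-1)/p))
             + ((p-1)/p) * \<mu> powr (-1/(p-1)) * (w powr (-1/(p-1)) * v powr (-1/p))"
    using p by (simp only: Xp Yp) (simp add: p'_def field_simps)
  finally show ?thesis using XY by simp
qed

lemma opt_lemma: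
  fixes p X Ar Br :: real
  assumes p: "p > 1" and X: "X \<ge> 0" and Ar: "Ar \<ge> 0" and Br: "Br > 0"
    and H: "\<And>\<mu>. \<mu> > 0 \<Longrightarrow> X \<le> \<mu> / p * Ar + ((p-1)/p) * \<mu> powr (-1/(p-1)) * Br"
  shows "X powr p \<le> Ar * Br powr (p-1)"
proof (cases "Ar = 0")
  case True
  have "X = 0"
  proof (rule ccontr)
    assume "X \<noteq> 0"
    then have Xp: "X > 0" using X by simp
    define \<mu> where "\<mu> = (2 * ((p-1)/p) * Br / X) powr (p-1)"
    have rp: "(p-1)/p > 0" using p by simp
    have bp: "2 * ((p-1)/p) * Br / X > 0" using rp Br Xp p by (intro divide_pos_pos mult_pos_pos) auto
    have "2 * ((p-1)/p) * Br / X \<noteq> 0" using bp by linarith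
    then have mp: "\<mu> > 0" unfolding \<mu>_def by (metis powr_gt_zero)
    have "\<mu> powr (-1/(p-1)) = (2 * ((p-1)/p) * Br / X) powr (-1)"
      using bp p by (simp add: \<mu>_def powr_powr)
    also have "... = X / (2 * ((p-1)/p) * Br)" using bp Br Xp p by (simp add: powr_minus inverse_eq_divide)
    finally have m2: "\<mu> powr (-1/(p-1)) = X / (2 * ((p-1)/p) * Br)" .
    have gen: "rr * (X / (2 * rr * Br)) * Br = X / 2" if "rr \<noteq> 0" for rr
      using that Br by (simp add: field_simps)
    have "((p-1)/p) * (X / (2 * ((p-1)/p) * Br)) * Br = X / 2"
      by (rule gen) (use p in simp)
    then have eqX: "((p-1)/p) * \<mu> powr (-1/(p-1)) * Br = X / 2" by (simp only: m2)
    have "X \<le> \<mu> / p * Ar + ((p-1)/p) * \<mu> powr (-1/(p-1)) * Br" by (rule H[OF mp])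
    also have "... = X/2" by (simp only: True eqX mult_zero_right add_0)
    finally have "X \<le> X/2" .
    with Xp show False by simp
  qed
  thus ?thesis using p True by simp
next
  case False
  then have Ap: "Ar > 0" using Ar by simp
  define r where "r = (p-1)/p"
  have rp: "r > 0" "r < 1" using p by (auto simp: r_def)
  define \<mu> where "\<mu> = (Br/Ar) powr r"
  have mp: "\<mu> > 0" using Ap Br by (simp add: \<mu>_def)
  have e1: "r * (-1/(p-1)) = -1/p" using p by (simp add: r_def field_simps)
  have m1: "\<mu> powr (-1/(p-1)) = (Br/Ar) powr (-1/p)"
  proof -
    have "\<mu> powr (-1/(p-1)) = (Br/Ar) powr (r * (-1/(p-1)))" by (simp only: \<mu>_def powr_powr)
    then show ?thesis by (simp only: e1)
  qed
  have "\<mu> / p * Ar + r * \<mu> powr (-1/(p-1)) * Br = Br powr r * Ar powr (1/p)"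
  proof -
    have a1: "\<mu> * Ar = Br powr r * Ar powr (1/p)"
    proof -
      have "\<mu> * Ar = Br powr r * (Ar powr 1 / Ar powr r)" using Ap Br by (simp add: \<mu>_def powr_divide)
      also have "Ar powr 1 / Ar powr r = Ar powr (1 - r)" by (simp add: powr_diff)
      also have "1 - r = 1/p" using p by (simp add: r_def field_simps)
      finally show ?thesis .
    qed
    have a2: "\<mu> powr (-1/(p-1)) * Br = Br powr r * Ar powr (1/p)"
    proof -
      have "\<mu> powr (-1/(p-1)) * Br = (Br powr (-1/p) / Ar powr (-1/p)) * Br powr 1"
        unfolding m1 using Ap Br by (simp add: powr_divide)
      also have "... = Br powr (1 + -1/p) * Ar powr (1/p)"
      proof -
        define k where "k = -1/p"
        have kk: "1/p = - k" by (simp add: k_def)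
        have a: "Br powr k * Br powr 1 = Br powr (1 + k)" by (simp only: powr_add[symmetric] add.commute)
        have b: "Ar powr k * Ar powr (-k) = 1" using Ap by (simp add: powr_add[symmetric])
        have c: "Ar powr k > 0" using Ap by simp
        have "(Br powr k / Ar powr k) * Br powr 1 = Br powr (1 + k) * Ar powr (-k)"
          using a b c by (simp add: field_simps)
        then show ?thesis by (simp only: k_def kk)
      qed
      also have "1 + -1/p = r" using p by (simp add: r_def field_simps)
      finally show ?thesis .
    qed
    have "\<mu> / p * Ar + r * \<mu> powr (-1/(p-1)) * Br = (1/p) * (\<mu> * Ar) + r * (\<mu> powr (-1/(p-1)) * Br)"
      by (simp add: algebra_simps)
    also have "... = (1/p + r) * (Br powr r * Ar powr (1/p))" by (simp only: a1 a2) (simp add: algebra_simps)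
    also have "1/p + r = 1" using p by (simp add: r_def field_simps)
    finally show ?thesis by simp
  qed
  with H[OF mp] have Xle: "X \<le> Br powr r * Ar powr (1/p)" by (simp add: r_def)
  have "X powr p \<le> (Br powr r * Ar powr (1/p)) powr p"
    using Xle X p by (intro powr_mono2) auto
  also have "... = Br powr (r*p) * Ar" using Ap Br p by (simp add: powr_mult powr_powr)
  also have "r * p = p - 1" using p by (simp add: r_def)
  finally show ?thesis by (simp add: mult.commute)
qed




locale hardy =
  fixes a p c1 c2 \<delta> :: real and \<phi> \<phi>' :: "real \<Rightarrow> real"
  assumes a_pos: "a > 0" and p_gt: "p > 1"
    and phi_cont: "continuous_on {0..a} \<phi>"
    and phi_C1: "\<forall>t\<in>{0<..a}. (\<phi> has_real_derivative \<phi>' t) (at t within {0<..a})"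
    and phi'_cont: "continuous_on {0<..a} \<phi>'"
    and phi_pos: "\<forall>t\<in>{0<..a}. \<phi> t > 0"
    and cpos: "c1 > 0" "c2 > 0" "\<delta> > 0"
    and bounds: "\<forall>t\<in>{0<..a}. c1 * t powr (p - 1 + \<delta>) \<le> \<phi> t \<and> \<phi> t \<le> c2 * t powr (p - 1 + \<delta>)"
    and logconc: "\<forall>t\<in>{0<..<a}. \<exists>d. ((\<lambda>s. \<phi>' s / \<phi> s) has_real_derivative d) (at t) \<and> d < 0"
begin

definition "q = 1/(p-1)"
definition "\<psi> t = \<phi> t powr (-1/(p-1))"
definition "I t = integral {t..a} \<psi>"
definition "\<epsilon> = \<delta>/(p-1)"
definition "A = c2 powr (-q)"
definition "B = c1 powr (-q)"

lemma q_pos: "q > 0" using p_gt by (simp add: q_def)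
lemma eps_pos: "\<epsilon> > 0" using p_gt cpos by (simp add: \<epsilon>_def)
lemma A_pos: "A > 0" using cpos by (simp add: A_def)
lemma B_pos: "B > 0" using cpos by (simp add: B_def)
lemma psi_alt: "\<psi> t = \<phi> t powr (-q)" by (simp add: \<psi>_def q_def)

lemma psi_pos: "t \<in> {0<..a} \<Longrightarrow> \<psi> t > 0"
proof -
  assume "t \<in> {0<..a}"
  then have "\<phi> t > 0" using phi_pos by blast
  then show ?thesis by (simp add: \<psi>_def)
qed

lemma phi_cont': "continuous_on {0<..a} \<phi>"
  using phi_cont by (rule continuous_on_subset) auto

lemma psi_cont: "continuous_on {0<..a} \<psi>"
  unfolding \<psi>_def using phi_pos
  by (intro continuous_on_powr phi_cont' continuous_on_const) auto

lemma psi_cont_iv: "0 < c \<Longrightarrow> continuous_on {c..a} \<psi>"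
  by (rule continuous_on_subset[OF psi_cont]) auto

lemma phi_deriv: "t \<in> {0<..<a} \<Longrightarrow> (\<phi> has_real_derivative \<phi>' t) (at t)"
proof -
  assume t: "t \<in> {0<..<a}"
  have t': "t \<in> {0<..a}" using t by auto
  have "(\<phi> has_real_derivative \<phi>' t) (at t within {0<..<a})"
    by (rule has_field_derivative_subset[OF phi_C1[rule_format, OF t']]) auto
  moreover have "at t within {0<..<a} = at t" using t by (intro at_within_open) auto
  ultimately show ?thesis by simp
qed

lemma psi_deriv: "t \<in> {0<..<a} \<Longrightarrow> (\<psi> has_real_derivative (- q * \<psi> t * \<phi>' t / \<phi> t)) (at t)"
proof -
  assume t: "t \<in> {0<..<a}"
  have pos: "\<phi> t > 0" using phi_pos t by auto
  have "((\<lambda>x. \<phi> x powr (-q)) has_real_derivative (-q) * \<phi> t powr (-q - of_nat 1) * \<phi>' t) (at t)"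
    by (rule DERIV_fun_powr[OF phi_deriv[OF t] pos])
  moreover have "(-q) * \<phi> t powr (-q - of_nat 1) * \<phi>' t = - q * \<psi> t * \<phi>' t / \<phi> t"
    using pos by (simp add: psi_alt powr_diff)
  ultimately show ?thesis by (simp add: psi_alt[abs_def])
qed

lemma I_deriv_within: "0 < c \<Longrightarrow> t \<in> {c..a} \<Longrightarrow> (I has_real_derivative - \<psi> t) (at t within {c..a})"
  unfolding I_def[abs_def] by (rule integral_has_real_derivative'[OF psi_cont_iv])

lemma I_deriv: "t \<in> {0<..<a} \<Longrightarrow> (I has_real_derivative - \<psi> t) (at t)"
proof -
  assume t: "t \<in> {0<..<a}"
  have "(I has_real_derivative - \<psi> t) (at t within {t/2<..<a})"
    using t by (intro has_field_derivative_subset[OF I_deriv_within[of "t/2"]]) auto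
  moreover have "at t within {t/2<..<a} = at t" using t by (intro at_within_open) auto
  ultimately show ?thesis by simp
qed

lemma I_cont_iv: "0 < c \<Longrightarrow> continuous_on {c..a} I"
  unfolding continuous_on_eq_continuous_within
  using I_deriv_within DERIV_continuous by blast

lemma I_cont: "continuous_on {0<..a} I"
proof (clarsimp simp: continuous_on_eq_continuous_within)
  fix t assume t: "0 < t" "t \<le> a"
  have "continuous (at t within {t/2..a}) I"
    using I_cont_iv[of "t/2"] t by (simp add: continuous_on_eq_continuous_within)
  moreover have "at t within {t/2..a} = at t within {0<..a}"
    using t by (intro at_within_nhd[of _ "{t/2<..}"]) auto
  ultimately show "continuous (at t within {0<..a}) I" by (simp add: continuous_within)
qed

lemma psi_integrable: "0 < x \<Longrightarrow> \<psi> integrable_on {x..a}"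
  by (intro integrable_continuous_interval psi_cont_iv)

lemma I_a: "I a = 0" by (simp add: I_def)

lemma I_mono: "0 < s \<Longrightarrow> s \<le> t \<Longrightarrow> t \<le> a \<Longrightarrow> I t \<le> I s"
proof -
  assume st: "0 < s" "s \<le> t" "t \<le> a"
  have "integral {s..t} \<psi> + integral {t..a} \<psi> = integral {s..a} \<psi>"
    using st by (intro Henstock_Kurzweil_Integration.integral_combine psi_integrable) auto
  moreover have "integral {s..t} \<psi> \<ge> 0"
    using st psi_pos by (intro integral_nonneg integrable_on_subinterval[OF psi_integrable[of s]]) (auto intro: less_imp_le)
  ultimately show ?thesis by (simp add: I_def)
qed


lemma psi_bounds: "s \<in> {0<..a} \<Longrightarrow> A * s powr (-1-\<epsilon>) \<le> \<psi> s \<and> \<psi> s \<le> B * s powr (-1-\<epsilon>)"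
proof -
  assume s: "s \<in> {0<..a}"
  let ?g = "p - 1 + \<delta>"
  have b: "c1 * s powr ?g \<le> \<phi> s" "\<phi> s \<le> c2 * s powr ?g" using bounds s by auto
  have sp: "s > 0" using s by auto
  have pos1: "c1 * s powr ?g > 0" using cpos sp by simp
  have e: "?g * (-q) = -1-\<epsilon>" using p_gt by (simp add: q_def \<epsilon>_def field_simps)
  have 1: "(c2 * s powr ?g) powr (-q) \<le> \<phi> s powr (-q)"
    by (rule powr_mono2') (use q_pos b phi_pos s in auto)
  have 2: "\<phi> s powr (-q) \<le> (c1 * s powr ?g) powr (-q)"
    by (rule powr_mono2') (use q_pos b pos1 phi_pos s in auto)
  have 3: "(c2 * s powr ?g) powr (-q) = A * s powr (-1-\<epsilon>)"
  proof -
    have "(c2 * s powr ?g) powr (-q) = c2 powr (-q) * s powr (?g * (-q))"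
      using cpos sp by (simp add: powr_mult powr_powr)
    also have "... = A * s powr (-1-\<epsilon>)" by (simp only: e A_def)
    finally show ?thesis .
  qed
  have 4: "(c1 * s powr ?g) powr (-q) = B * s powr (-1-\<epsilon>)"
  proof -
    have "(c1 * s powr ?g) powr (-q) = c1 powr (-q) * s powr (?g * (-q))"
      using cpos sp by (simp add: powr_mult powr_powr)
    also have "... = B * s powr (-1-\<epsilon>)" by (simp only: e B_def)
    finally show ?thesis .
  qed
  show ?thesis using 1 2 3 4 by (simp add: psi_alt)
qed

lemma pow_has_integral: "0 < t \<Longrightarrow> t \<le> a \<Longrightarrow>
   ((\<lambda>s. s powr (-1-\<epsilon>)) has_integral ((t powr (-\<epsilon>) - a powr (-\<epsilon>))/\<epsilon>)) {t..a}"
proof -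
  assume t: "0 < t" "t \<le> a"
  have "((\<lambda>s. s powr (-1-\<epsilon>)) has_integral ((\<lambda>s. - (s powr (-\<epsilon>)) / \<epsilon>) a - (\<lambda>s. - (s powr (-\<epsilon>)) / \<epsilon>) t)) {t..a}"
  proof (rule fundamental_theorem_of_calculus[OF t(2)])
    fix x assume x: "x \<in> {t..a}"
    then have xp: "x > 0" using t by auto
    have "((\<lambda>s. - (s powr (-\<epsilon>)) / \<epsilon>) has_real_derivative - ((-\<epsilon>) * x powr (-\<epsilon> - 1)) / \<epsilon>) (at x)"
      using xp by (auto intro!: derivative_eq_intros)
    moreover have "- ((-\<epsilon>) * x powr (-\<epsilon> - 1)) / \<epsilon> = x powr (-1-\<epsilon>)"
    proof -
      have e: "(-\<epsilon> - 1) = (-1-\<epsilon>)" by simp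
      show ?thesis using eps_pos by (simp only: e) simp
    qed
    ultimately show "((\<lambda>s. - (s powr (-\<epsilon>)) / \<epsilon>) has_vector_derivative x powr (-1-\<epsilon>)) (at x within {t..a})"
      by (simp add: has_real_derivative_iff_has_vector_derivative[symmetric] has_field_derivative_at_within)
  qed
  thus ?thesis by (simp add: diff_divide_distrib)
qed

lemma I_bounds: "t \<in> {0<..a} \<Longrightarrow> A * ((t powr (-\<epsilon>) - a powr (-\<epsilon>))/\<epsilon>) \<le> I t \<and> I t \<le> B * ((t powr (-\<epsilon>) - a powr (-\<epsilon>))/\<epsilon>)"
proof -
  assume t: "t \<in> {0<..a}"
  have hi: "((\<lambda>s. s powr (-1-\<epsilon>)) has_integral ((t powr (-\<epsilon>) - a powr (-\<epsilon>))/\<epsilon>)) {t..a}"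
    using t pow_has_integral by auto
  have pi: "(\<psi> has_integral I t) {t..a}" unfolding I_def using t psi_integrable by auto
  have "A * ((t powr (-\<epsilon>) - a powr (-\<epsilon>))/\<epsilon>) \<le> I t"
    by (rule has_integral_le[OF has_integral_mult_right[OF hi] pi]) (use t psi_bounds in auto)
  moreover have "I t \<le> B * ((t powr (-\<epsilon>) - a powr (-\<epsilon>))/\<epsilon>)"
    by (rule has_integral_le[OF pi has_integral_mult_right[OF hi]]) (use t psi_bounds in auto)
  ultimately show ?thesis by simp
qed

lemma I_pos: "t \<in> {0<..<a} \<Longrightarrow> I t > 0"
proof -
  assume t: "t \<in> {0<..<a}"
  have "a powr (-\<epsilon>) < t powr (-\<epsilon>)" using t eps_pos by (intro powr_less_mono2_neg) auto
  then have "A * ((t powr (-\<epsilon>) - a powr (-\<epsilon>))/\<epsilon>) > 0" using A_pos eps_pos by simp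
  with I_bounds[of t] t show ?thesis by auto
qed

lemma I_nonneg: "t \<in> {0<..a} \<Longrightarrow> I t \<ge> 0"
  using I_pos[of t] I_a by (cases "t = a") auto

definition "h t = - q * (\<phi>' t / \<phi> t) * I t + \<psi> t"
definition "\<eta> t = \<psi> t / I t"

lemma eta_eq: "eta_a \<phi> p a = \<eta>"
  by (rule ext) (simp add: eta_a_def \<eta>_def I_def \<psi>_def[abs_def])

lemma h_deriv: "t \<in> {0<..<a} \<Longrightarrow> \<exists>D. (h has_real_derivative D) (at t) \<and> D > 0"
proof -
  assume t: "t \<in> {0<..<a}"
  obtain d where d: "((\<lambda>s. \<phi>' s / \<phi> s) has_real_derivative d) (at t)" "d < 0" using logconc t by blast
  have "(h has_real_derivative (- q * (d * I t + (\<phi>' t / \<phi> t) * (- \<psi> t)) + (- q * \<psi> t * \<phi>' t / \<phi> t))) (at t)"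
    unfolding h_def[abs_def]
    using DERIV_add[OF DERIV_cmult[OF DERIV_mult[OF d(1) I_deriv[OF t]], of "-q"] psi_deriv[OF t]]
    by (simp add: algebra_simps)
  moreover have "- q * (d * I t + (\<phi>' t / \<phi> t) * (- \<psi> t)) + (- q * \<psi> t * \<phi>' t / \<phi> t) = - q * d * I t"
    by (simp add: algebra_simps)
  moreover have "- q * d * I t > 0" using q_pos d(2) I_pos[OF t] by (simp add: mult_neg_pos mult_pos_neg)
  ultimately show ?thesis by auto
qed

lemma h_strict: "0 < s \<Longrightarrow> s < t \<Longrightarrow> t < a \<Longrightarrow> h s < h t"
  by (rule DERIV_pos_imp_increasing) (use h_deriv in auto)

lemma eta_deriv: "t \<in> {0<..<a} \<Longrightarrow> (\<eta> has_real_derivative (\<psi> t * h t / (I t)^2)) (at t)"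
proof -
  assume t: "t \<in> {0<..<a}"
  have "(\<eta> has_real_derivative ((- q * \<psi> t * \<phi>' t / \<phi> t) * I t - \<psi> t * (- \<psi> t)) / (I t * I t)) (at t)"
    unfolding \<eta>_def[abs_def] using I_pos[OF t] by (intro DERIV_divide psi_deriv I_deriv t) auto
  moreover have "((- q * \<psi> t * \<phi>' t / \<phi> t) * I t - \<psi> t * (- \<psi> t)) / (I t * I t) = \<psi> t * h t / (I t)^2"
    by (simp add: h_def power2_eq_square algebra_simps)
  ultimately show ?thesis by simp
qed

lemma eta_deriv_sign: "t \<in> {0<..<a} \<Longrightarrow> (h t < 0 \<longleftrightarrow> \<psi> t * h t / (I t)^2 < 0) \<and> (h t > 0 \<longleftrightarrow> \<psi> t * h t / (I t)^2 > 0)"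
proof -
  assume t: "t \<in> {0<..<a}"
  have "\<psi> t > 0" using psi_pos t by auto
  moreover have "I t > 0" using I_pos[OF t] .
  then have "(I t)^2 > 0" by simp
  ultimately show ?thesis by (simp add: divide_less_0_iff zero_less_divide_iff zero_less_mult_iff mult_less_0_iff)
qed


lemma h_cont: "continuous_on {0<..a} h"
  unfolding h_def[abs_def] using phi_pos
  by (intro continuous_intros phi'_cont phi_cont' I_cont psi_cont) auto

lemma h_pos_pt: "\<exists>t1\<in>{0<..<a}. h t1 > 0"
proof -
  have ha: "h a > 0" using psi_pos[of a] a_pos by (simp add: h_def I_a)
  have "continuous (at a within {0<..a}) h" using h_cont a_pos
    by (simp add: continuous_on_eq_continuous_within)
  then have "((\<lambda>x. h x) \<longlongrightarrow> h a) (at a within {0<..a})" by (simp add: continuous_within)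
  then have "eventually (\<lambda>x. h x > 0) (at a within {0<..a})" using ha by (rule order_tendstoD)
  then obtain d where d: "d > 0" "\<And>x. x \<in> {0<..a} \<Longrightarrow> x \<noteq> a \<Longrightarrow> dist x a < d \<Longrightarrow> h x > 0"
    by (auto simp: eventually_at)
  let ?x = "max (a/2) (a - d/2)"
  have "?x \<in> {0<..<a}" using a_pos d by auto
  moreover have "h ?x > 0" using a_pos d by (intro d(2)) (auto simp: dist_real_def)
  ultimately show ?thesis by blast
qed

lemma eta_lower: "0 < t \<Longrightarrow> t < a \<Longrightarrow> A * \<epsilon> / (B * t) \<le> \<eta> t"
proof -
  assume t: "0 < t" "t < a"
  have ps: "A * t powr (-1-\<epsilon>) \<le> \<psi> t" using psi_bounds[of t] t by auto
  have Ib: "I t \<le> B * ((t powr (-\<epsilon>) - a powr (-\<epsilon>))/\<epsilon>)" using I_bounds[of t] t by auto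
  have "B * ((t powr (-\<epsilon>) - a powr (-\<epsilon>))/\<epsilon>) \<le> B * (t powr (-\<epsilon>) / \<epsilon>)"
    using B_pos eps_pos by (intro mult_left_mono divide_right_mono) auto
  with Ib have Ib2: "I t \<le> B * (t powr (-\<epsilon>) / \<epsilon>)" by linarith
  have Ip: "I t > 0" using I_pos t by auto
  have tp: "t powr (-1-\<epsilon>) = t powr (-\<epsilon>) / t"
  proof -
    have "-1-\<epsilon> = -\<epsilon> - 1" by simp
    then have "t powr (-1-\<epsilon>) = t powr (-\<epsilon> - 1)" by (rule arg_cong)
    also have "... = t powr (-\<epsilon>) / t" using t by (simp add: powr_diff)
    finally show ?thesis .
  qed
  have "A * \<epsilon> / (B * t) = (A * t powr (-1-\<epsilon>)) / (B * (t powr (-\<epsilon>) / \<epsilon>))"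
    using t eps_pos B_pos by (simp add: tp field_simps)
  also have "... \<le> \<psi> t / I t"
    using ps Ib2 Ip A_pos t psi_pos[of t] by (intro frac_le) auto
  finally show ?thesis by (simp add: \<eta>_def)
qed

lemma h_neg_pt: "\<exists>t0\<in>{0<..<a}. h t0 < 0"
proof (rule ccontr)
  assume nt: "\<not> (\<exists>t0\<in>{0<..<a}. h t0 < 0)"
  have hnn: "h t \<ge> 0" if "t \<in> {0<..<a}" for t
    using nt that by (meson not_le)
  let ?N = "\<eta> (a/2)"
  have mono: "\<eta> t \<le> ?N" if t: "0 < t" "t \<le> a/2" for t
  proof (rule DERIV_nonneg_imp_nondecreasing[OF t(2)])
    fix x assume x: "t \<le> x" "x \<le> a/2"
    then have xin: "x \<in> {0<..<a}" using t a_pos by auto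
    have "\<psi> x * h x / (I x)^2 \<ge> 0" using psi_pos[of x] hnn[OF xin] xin by auto
    thus "\<exists>y. (\<eta> has_real_derivative y) (at x) \<and> 0 \<le> y" using eta_deriv[OF xin] by blast
  qed
  define t where "t = min (a/2) (A * \<epsilon> / (B * (\<bar>?N\<bar> + 1)))"
  have tp: "t > 0" using a_pos A_pos B_pos eps_pos by (simp add: t_def)
  have ta: "t \<le> a/2" unfolding t_def by (rule min.cobounded1)
  have "t \<le> A * \<epsilon> / (B * (\<bar>?N\<bar> + 1))" unfolding t_def by (rule min.cobounded2)
  then have "t * (B * (\<bar>?N\<bar> + 1)) \<le> A * \<epsilon>" using B_pos by (simp add: le_divide_eq)
  then have "\<bar>?N\<bar> + 1 \<le> A * \<epsilon> / (B * t)" using B_pos tp by (simp add: le_divide_eq algebra_simps)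
  also have "... \<le> \<eta> t" using eta_lower[of t] tp ta a_pos by auto
  also have "... \<le> ?N" using mono[OF tp ta] .
  finally show False by linarith
qed

lemma T_exists: "\<exists>T\<in>{0<..<a}. h T = 0"
proof -
  obtain t0 where t0: "t0 \<in> {0<..<a}" "h t0 < 0" using h_neg_pt by blast
  obtain t1 where t1: "t1 \<in> {0<..<a}" "h t1 > 0" using h_pos_pt by blast
  have lt: "t0 < t1"
  proof (rule ccontr)
    assume "\<not> t0 < t1"
    then have "t1 \<le> t0" by simp
    then have "h t1 \<le> h t0" using h_strict[of t1 t0] t0 t1 by (cases "t1 = t0") auto
    with t0 t1 show False by simp
  qed
  have "continuous_on {t0..t1} h" by (rule continuous_on_subset[OF h_cont]) (use t0 t1 in auto)
  then obtain T where "T \<ge> t0" "T \<le> t1" "h T = 0"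
    using IVT'[of h t0 0 t1] t0 t1 lt by auto
  thus ?thesis using t0 t1 by auto
qed

lemma partA: "\<exists>!T. T \<in> {0<..<a} \<and>
        (\<forall>t\<in>{0<..<T}. \<exists>d. (\<eta> has_real_derivative d) (at t) \<and> d < 0) \<and>
        (\<forall>t\<in>{T<..<a}. \<exists>d. (\<eta> has_real_derivative d) (at t) \<and> d > 0)"
proof -
  obtain T where T: "T \<in> {0<..<a}" "h T = 0" using T_exists by blast
  have neg: "\<forall>t\<in>{0<..<T}. \<exists>d. (\<eta> has_real_derivative d) (at t) \<and> d < 0"
  proof
    fix t assume t: "t \<in> {0<..<T}"
    then have tin: "t \<in> {0<..<a}" using T by auto
    have "h t < 0" using h_strict[of t T] t T by auto
    thus "\<exists>d. (\<eta> has_real_derivative d) (at t) \<and> d < 0"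
      using eta_deriv[OF tin] eta_deriv_sign[OF tin] by blast
  qed
  have pos: "\<forall>t\<in>{T<..<a}. \<exists>d. (\<eta> has_real_derivative d) (at t) \<and> d > 0"
  proof
    fix t assume t: "t \<in> {T<..<a}"
    then have tin: "t \<in> {0<..<a}" using T by auto
    have "h t > 0" using h_strict[of T t] t T by auto
    thus "\<exists>d. (\<eta> has_real_derivative d) (at t) \<and> d > 0"
      using eta_deriv[OF tin] eta_deriv_sign[OF tin] by blast
  qed
  show ?thesis
  proof (rule ex1I[of _ T])
    show "T \<in> {0<..<a} \<and> (\<forall>t\<in>{0<..<T}. \<exists>d. (\<eta> has_real_derivative d) (at t) \<and> d < 0) \<and>
        (\<forall>t\<in>{T<..<a}. \<exists>d. (\<eta> has_real_derivative d) (at t) \<and> d > 0)" using T neg pos by blast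
  next
    fix S assume S: "S \<in> {0<..<a} \<and> (\<forall>t\<in>{0<..<S}. \<exists>d. (\<eta> has_real_derivative d) (at t) \<and> d < 0) \<and>
        (\<forall>t\<in>{S<..<a}. \<exists>d. (\<eta> has_real_derivative d) (at t) \<and> d > 0)"
    show "S = T"
    proof (rule ccontr)
      assume ne: "S \<noteq> T"
      define m where "m = (S + T) / 2"
      have "(m \<in> {0<..<S} \<and> m \<in> {T<..<a}) \<or> (m \<in> {0<..<T} \<and> m \<in> {S<..<a})"
        using ne S T by (auto simp: m_def)
      then obtain d1 d2 where "(\<eta> has_real_derivative d1) (at m)" "d1 < 0"
          "(\<eta> has_real_derivative d2) (at m)" "d2 > 0"
        using S neg pos by blast
      then show False using DERIV_unique by force
    qed
  qed
qed

end



lemma borel_version: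
  fixes g :: "real \<Rightarrow> real" and a :: real
  assumes a: "a > 0" and gi: "\<forall>x\<in>{0<..a}. g absolutely_integrable_on {x..a}"
  obtains g1 N where "g1 \<in> borel_measurable borel" "N \<in> null_sets lborel"
    "\<And>x. x \<in> {0<..<a} - N \<Longrightarrow> g1 x = g x" "\<And>x. x \<notin> {0<..<a} - N \<Longrightarrow> g1 x = 0"
proof -
  define G where "G t = indicator {0<..a} t * g t" for t
  define u where "u i t = indicator {a / (real i + 2)..a} t * g t" for i t
  have um: "u i \<in> borel_measurable lebesgue" for i
  proof -
    have x: "a / (real i + 2) \<in> {0<..a}" using a by (auto simp: field_simps)
    have "set_integrable lebesgue {a / (real i + 2)..a} g" using gi x by blast
    then have "integrable lebesgue (\<lambda>t. indicator {a / (real i + 2)..a} t *\<^sub>R g t)"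
      by (simp add: set_integrable_def)
    then show ?thesis unfolding u_def by (simp add: borel_measurable_integrable)
  qed
  have conv: "(\<lambda>i. u i t) \<longlonglongrightarrow> G t" for t
  proof (cases "0 < t \<and> t \<le> a")
    case True
    have "eventually (\<lambda>i. u i t = G t) sequentially"
      unfolding eventually_sequentially
    proof (intro exI allI impI)
      fix n assume n: "nat \<lceil>a / t\<rceil> \<le> n"
      have "a / t \<le> real n" using n by linarith
      then have "a \<le> real n * t" using True by (simp add: divide_le_eq)
      then have "a \<le> (real n + 2) * t" using True by (simp add: algebra_simps)
      then have "a / (real n + 2) \<le> t" by (simp add: divide_le_eq mult.commute)
      then show "u n t = G t" using True by (simp add: u_def G_def indicator_def)
    qed
    then show ?thesis by (rule tendsto_eventually)
  next
    case False
    then have "u i t = 0" "G t = 0" for i using a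
      by (auto simp: u_def G_def indicator_def) (smt (verit, best) divide_pos_pos of_nat_0_le_iff)
    then show ?thesis by simp
  qed
  have Gm: "G \<in> borel_measurable lebesgue"
    by (rule borel_measurable_LIMSEQ_real[OF conv um])
  obtain g' where g': "g' \<in> borel_measurable lborel" "AE x in lborel. G x = g' x"
    using completion_ex_borel_measurable_real[OF Gm] by blast
  obtain N where N: "{x \<in> space lborel. \<not> G x = g' x} \<subseteq> N" "emeasure lborel N = 0" "N \<in> sets lborel"
    using g'(2) by (rule AE_E)
  define g1 where "g1 x = indicator ({0<..<a} - N) x * g' x" for x
  have "g1 \<in> borel_measurable borel"
  proof -
    have "g' \<in> borel_measurable borel" using g'(1) by simp
    moreover have "{0<..<a} - N \<in> sets borel" using N(3) by auto
    ultimately show ?thesis unfolding g1_def by measurable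
  qed
  moreover have "N \<in> null_sets lborel" using N by (simp add: null_sets_def)
  moreover have "g1 x = g x" if "x \<in> {0<..<a} - N" for x
  proof -
    have "G x = g' x" using N(1) that by auto
    then show ?thesis using that by (auto simp: g1_def G_def indicator_def)
  qed
  moreover have "g1 x = 0" if "x \<notin> {0<..<a} - N" for x
    using that by (simp add: g1_def)
  ultimately show ?thesis using that by blast
qed

lemma meas_restr:
  fixes w :: "real \<Rightarrow> real"
  assumes "continuous_on S w" "S \<in> sets borel"
  shows "(\<lambda>x. ennreal (w x) * indicator S x) \<in> borel_measurable lborel"
proof -
  have "(\<lambda>x. indicator S x *\<^sub>R w x) \<in> borel_measurable borel"
    by (rule borel_measurable_continuous_on_indicator[OF assms(2,1)])
  then have "(\<lambda>x. ennreal (indicator S x *\<^sub>R w x)) \<in> borel_measurable lborel" by simp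
  moreover have "ennreal (indicator S x *\<^sub>R w x) = ennreal (w x) * indicator S x" for x
    by (simp add: indicator_def)
  ultimately show ?thesis by simp
qed




lemma hi_open: fixes f :: "real \<Rightarrow> real"
  shows "(f has_integral y) {c..d} \<Longrightarrow> (f has_integral y) {c<..<d}"
  using has_integral_open_interval[of f y c d] by simp

context hardy begin

definition "r = (p-1)/p"
lemma r_pos: "r > 0" and r_lt1: "r < 1" using p_gt by (auto simp: r_def)

lemma eta_pos: "t \<in> {0<..<a} \<Longrightarrow> \<eta> t > 0"
  using psi_pos[of t] I_pos[of t] by (auto simp: \<eta>_def)

lemma eta_cont_iv: assumes "0 < x" "y < a" shows "continuous_on {x..y} \<eta>"
proof -
  have "isCont \<eta> t" if "t \<in> {x..y}" for t
  proof -
    have "t \<in> {0<..<a}" using that assms by auto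
    then show ?thesis using eta_deriv DERIV_isCont by blast
  qed
  then show ?thesis by (simp add: continuous_at_imp_continuous_on)
qed

lemma etaT_bounds:
  assumes T: "T \<in> {0<..<a}" and Tpos: "\<forall>t\<in>{T<..<a}. \<exists>d. (\<eta> has_real_derivative d) (at t) \<and> d > 0"
    and t: "t \<in> {0<..<a}"
  shows "0 \<le> eta_aT \<phi> p a T t \<and> eta_aT \<phi> p a T t \<le> \<eta> t"
proof (cases "t \<le> T")
  case True
  then show ?thesis using eta_pos[OF t] by (simp add: eta_aT_def eta_eq)
next
  case False
  have 1: "T < t" using False by simp
  have 2: "\<And>x. T < x \<Longrightarrow> x < t \<Longrightarrow> \<exists>y. (\<eta> has_real_derivative y) (at x) \<and> 0 < y"
    using Tpos t by auto
  have 3: "continuous_on {T..t} \<eta>" using T t by (intro eta_cont_iv) auto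
  have "\<eta> T < \<eta> t" by (rule DERIV_pos_imp_increasing_open[OF 1 2 3])
  then show ?thesis using False eta_pos[of T] T by (simp add: eta_aT_def eta_eq)
qed

lemma psi_p_phi: "t \<in> {0<..a} \<Longrightarrow> \<psi> t powr p * \<phi> t = \<psi> t"
proof -
  assume t: "t \<in> {0<..a}"
  have ph: "\<phi> t > 0" using phi_pos t by auto
  have e1: "\<psi> t powr p = \<phi> t powr ((-1/(p-1)) * p)" by (simp only: \<psi>_def powr_powr)
  have e2: "\<phi> t powr 1 = \<phi> t" using ph by simp
  have "\<psi> t powr p * \<phi> t = \<phi> t powr ((-1/(p-1)) * p) * \<phi> t powr 1" by (simp only: e1 e2)
  also have "... = \<phi> t powr ((-1/(p-1)) * p + 1)" by (simp only: powr_add)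
  also have "(-1/(p-1)) * p + 1 = -1/(p-1)" using p_gt by (simp add: field_simps)
  finally show ?thesis by (simp add: \<psi>_def)
qed

lemma K0_has_integral:
  assumes t: "t \<in> {0<..<a}"
  shows "((\<lambda>s. \<psi> s * I s powr (-1/p)) has_integral (I t powr r / r)) {t<..<a}"
proof -
  have "((\<lambda>s. \<psi> s * I s powr (-1/p)) has_integral ((\<lambda>s. - (I s powr r / r)) a - (\<lambda>s. - (I s powr r / r)) t)) {t..a}"
  proof (rule fundamental_theorem_of_calculus_interior)
    show "t \<le> a" using t by simp
    show "continuous_on {t..a} (\<lambda>s. - (I s powr r / r))"
    proof -
      have "continuous_on {t..a} (\<lambda>s. I s powr r)"
        using I_nonneg r_pos t by (intro continuous_on_powr' I_cont_iv continuous_on_const) auto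
      then show ?thesis by (intro continuous_on_minus continuous_on_divide continuous_on_const) (use r_pos in auto)
    qed
    fix x assume x: "x \<in> {t<..<a}"
    then have xin: "x \<in> {0<..<a}" using t by auto
    have Ip: "I x > 0" using I_pos[OF xin] .
    have "((\<lambda>s. - (I s powr r / r)) has_real_derivative - (r * I x powr (r - of_nat 1) * (- \<psi> x) / r)) (at x)"
      by (intro DERIV_minus DERIV_cdivide DERIV_fun_powr[OF I_deriv[OF xin] Ip])
    moreover have "- (r * I x powr (r - of_nat 1) * (- \<psi> x) / r) = \<psi> x * I x powr (-1/p)"
    proof -
      have "r - of_nat 1 = -1/p" using p_gt by (simp add: r_def field_simps)
      then show ?thesis using r_pos by simp
    qed
    ultimately show "((\<lambda>s. - (I s powr r / r)) has_vector_derivative \<psi> x * I x powr (-1/p)) (at x)"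
      by (simp add: has_real_derivative_iff_has_vector_derivative[symmetric])
  qed
  then have "((\<lambda>s. \<psi> s * I s powr (-1/p)) has_integral (I t powr r / r)) {t..a}"
    by (simp add: I_a)
  then show ?thesis by (rule hi_open)
qed


definition "k t = r powr (1-p) * \<psi> t * I t powr (-1-r)"

lemma I_cont_open: "continuous_on {0<..<a} I"
  by (rule continuous_on_subset[OF I_cont]) auto

lemma psi_cont_open: "continuous_on {0<..<a} \<psi>"
  by (rule continuous_on_subset[OF psi_cont]) auto

lemma I_pos': "0 < t \<Longrightarrow> t < a \<Longrightarrow> I t > 0" using I_pos by auto
lemma I_nz: "0 < t \<Longrightarrow> t < x \<Longrightarrow> x < a \<Longrightarrow> I x \<noteq> 0" using I_pos'[of x] by auto

lemma k_cont: "continuous_on {0<..<a} k"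
  unfolding k_def[abs_def]
  by (intro continuous_intros I_cont_open psi_cont_open) (metis I_pos' greaterThanLessThan_iff less_irrefl)

lemma k_nonneg: "t \<in> {0<..<a} \<Longrightarrow> k t \<ge> 0"
  using psi_pos[of t] r_pos by (simp add: k_def)

lemma k_has_integral:
  assumes xs: "0 < x" "x \<le> s" "s < a"
  shows "(k has_integral (r powr (-p) * (I s powr (-r) - I x powr (-r)))) {x..s}"
proof -
  have "(k has_integral ((\<lambda>t. r powr (-p) * I t powr (-r)) s - (\<lambda>t. r powr (-p) * I t powr (-r)) x)) {x..s}"
  proof (rule fundamental_theorem_of_calculus[OF xs(2)])
    fix t assume t: "t \<in> {x..s}"
    then have tin: "t \<in> {0<..<a}" using xs by auto
    have Ip: "I t > 0" using I_pos[OF tin] .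
    have "((\<lambda>t. r powr (-p) * I t powr (-r)) has_real_derivative r powr (-p) * ((-r) * I t powr (-r - of_nat 1) * (- \<psi> t))) (at t)"
      by (intro DERIV_cmult DERIV_fun_powr[OF I_deriv[OF tin] Ip])
    moreover have "r powr (-p) * ((-r) * I t powr (-r - of_nat 1) * (- \<psi> t)) = k t"
    proof -
      have e1: "(-r - of_nat 1) = (-1-r)" by simp
      have e2: "r powr (-p) * r = r powr (1-p)"
      proof -
        have "r powr (-p) * r = r powr (-p) * r powr 1" using r_pos by simp
        also have "... = r powr (-p + 1)" by (simp only: powr_add)
        finally show ?thesis by simp
      qed
      have "r powr (-p) * ((-r) * I t powr (-r - of_nat 1) * (- \<psi> t)) = (r powr (-p) * r) * \<psi> t * I t powr (-r - of_nat 1)"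
        by (simp add: algebra_simps)
      also have "... = k t" by (simp only: e1 e2 k_def)
      finally show ?thesis .
    qed
    ultimately show "((\<lambda>t. r powr (-p) * I t powr (-r)) has_vector_derivative k t) (at t within {x..s})"
      by (simp add: has_real_derivative_iff_has_vector_derivative[symmetric] has_field_derivative_at_within)
  qed
  then show ?thesis by (simp add: algebra_simps)
qed

lemma k_bound:
  assumes s: "s \<in> {0<..<a}"
  shows "(\<integral>\<^sup>+ t. ennreal (k t) * indicator {0<..<s} t \<partial>lborel) \<le> ennreal (r powr (-p) * I s powr (-r))"
proof -
  define f where "f n t = ennreal (k t) * indicator {s / (real n + 2)..s} t" for n t
  have xn: "0 < s / (real n + 2)" "s / (real n + 2) \<le> s" for n
    using s by (auto simp: field_simps)
  have fi: "integral\<^sup>N lborel (f n) \<le> ennreal (r powr (-p) * I s powr (-r))" for n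
  proof -
    have "integral\<^sup>N lborel (f n) = ennreal (r powr (-p) * (I s powr (-r) - I (s / (real n + 2)) powr (-r)))"
      unfolding f_def
      by (rule nn_integral_has_integral_lebesgue'[OF _ k_has_integral[OF xn(1)[of n] xn(2)[of n]]])
         (use s xn(1)[of n] k_nonneg in auto)
    also have "... \<le> ennreal (r powr (-p) * I s powr (-r))"
      by (intro ennreal_leI mult_left_mono) auto
    finally show ?thesis .
  qed
  have fm: "f n \<in> borel_measurable lborel" for n
    unfolding f_def using s xn[of n]
    by (intro meas_restr continuous_on_subset[OF k_cont]) auto
  have inc: "incseq f"
  proof (rule incseq_SucI, rule le_funI)
    fix n t
    have "s / (real (Suc n) + 2) \<le> s / (real n + 2)" using s by (intro divide_left_mono) auto
    then show "f n t \<le> f (Suc n) t"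
      unfolding f_def by (intro mult_left_mono) (auto simp: indicator_def)
  qed
  have pt: "ennreal (k t) * indicator {0<..<s} t \<le> (SUP n. f n t)" for t
  proof (cases "t \<in> {0<..<s}")
    case True
    obtain n :: nat where n: "s / t \<le> real n" using real_arch_simple by blast
    have "s / (real n + 2) \<le> t"
    proof -
      have "s \<le> real n * t" using n True by (simp add: divide_le_eq)
      then have "s \<le> (real n + 2) * t" using True by (simp add: algebra_simps)
      then show ?thesis by (simp add: divide_le_eq mult.commute)
    qed
    then have "f n t = ennreal (k t)" using True by (simp add: f_def indicator_def)
    then have "ennreal (k t) \<le> (SUP n. f n t)" by (metis SUP_upper UNIV_I)
    then show ?thesis using True by simp
  next
    case False
    then show ?thesis by simp
  qed
  have "(\<integral>\<^sup>+ t. ennreal (k t) * indicator {0<..<s} t \<partial>lborel) \<le> (\<integral>\<^sup>+ t. (SUP n. f n t) \<partial>lborel)"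
    by (intro nn_integral_mono pt)
  also have "... = (SUP n. integral\<^sup>N lborel (f n))"
    by (rule nn_integral_monotone_convergence_SUP[OF inc fm])
  also have "... \<le> ennreal (r powr (-p) * I s powr (-r))"
    by (intro SUP_least fi)
  finally show ?thesis .
qed


lemma kalg: assumes Ip: "I t > 0"
  shows "(I t powr r / r) powr (p-1) * \<psi> t * I t powr (-p) = k t"
proof -
  define x where "x = I t"
  have xp: "x > 0" using Ip by (simp add: x_def)
  have e: "r * (p-1) + (-p) = -1-r" using p_gt by (simp add: r_def field_simps)
  have a1: "(x powr r / r) powr (p-1) = x powr (r*(p-1)) / r powr (p-1)"
    using xp r_pos by (simp add: powr_divide powr_powr)
  have a2: "x powr (r*(p-1)) * x powr (-p) = x powr (-1-r)"
    by (simp only: powr_add[symmetric] e)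
  have a3: "r powr (1-p) = 1 / r powr (p-1)"
    using r_pos by (simp add: powr_minus_divide[symmetric])
  have "(x powr r / r) powr (p-1) * \<psi> t * x powr (-p) = (x powr (r*(p-1)) * x powr (-p)) / r powr (p-1) * \<psi> t"
    by (simp only: a1) (simp add: algebra_simps)
  also have "... = r powr (1-p) * \<psi> t * x powr (-1-r)"
    by (simp only: a2 a3) (simp add: algebra_simps)
  finally show ?thesis by (simp add: k_def x_def)
qed

lemma hardy_pt:
  fixes g1 u :: "real \<Rightarrow> real"
  assumes g1m: "g1 \<in> borel_measurable borel"
    and gi: "g1 absolutely_integrable_on {t..a}"
    and ut: "\<bar>u t\<bar> \<le> integral {t..a} (\<lambda>s. \<bar>g1 s\<bar>)"
    and t: "t \<in> {0<..<a}"
  shows "ennreal (\<bar>u t\<bar> powr p * \<psi> t * I t powr (-p)) \<le>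
    ennreal (k t) * (\<integral>\<^sup>+ s. ennreal (\<bar>g1 s\<bar> powr p * (\<phi> s * I s powr r)) * indicator {t<..<a} s \<partial>lborel)"
    (is "_ \<le> _ * ?\<Phi>")
proof -
  have Ip: "I t > 0" using I_pos[OF t] .
  have kp: "k t > 0" using psi_pos[of t] t r_pos Ip by (simp add: k_def)
  show ?thesis
  proof (cases ?\<Phi> rule: ennreal_cases)
    case top
    then have "ennreal (k t) * ?\<Phi> = top" using kp by (simp add: ennreal_mult_top)
    then show ?thesis by simp
  next
    case (real Ar)
    note Ar = real
    define X where "X = integral {t..a} (\<lambda>s. \<bar>g1 s\<bar>)"
    define Br where "Br = I t powr r / r"
    have Brp: "Br > 0" using Ip r_pos by (simp add: Br_def)
    have absint: "(\<lambda>s. \<bar>g1 s\<bar>) integrable_on {t..a}"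
      using gi by (simp add: absolutely_integrable_on_def)
    have X0: "X \<ge> 0" unfolding X_def by (intro integral_nonneg absint) auto
    have sub: "{t<..<a} \<subseteq> {0<..<a}" using t by auto
    have nz: "\<forall>x\<in>{t<..<a}. I x \<noteq> 0"
    proof
      fix x assume "x \<in> {t<..<a}" then show "I x \<noteq> 0" using t I_nz[of t x] by auto
    qed
    have FM: "(\<lambda>s. ennreal (\<bar>g1 s\<bar> powr p * (\<phi> s * I s powr r)) * indicator {t<..<a} s) \<in> borel_measurable lborel"
    proof -
      have c: "continuous_on {t<..<a} (\<lambda>s. \<phi> s * I s powr r)"
        using t by (intro continuous_intros continuous_on_subset[OF phi_cont']
            continuous_on_subset[OF I_cont_open]) (use sub nz in auto)
      have m1: "(\<lambda>s. ennreal (\<phi> s * I s powr r) * indicator {t<..<a} s) \<in> borel_measurable lborel"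
        by (rule meas_restr[OF c]) auto
      have m2: "(\<lambda>s. ennreal (\<bar>g1 s\<bar> powr p)) \<in> borel_measurable lborel"
        using g1m by measurable
      have eq: "ennreal (\<bar>g1 s\<bar> powr p * (\<phi> s * I s powr r)) * indicator {t<..<a} s =
            ennreal (\<bar>g1 s\<bar> powr p) * (ennreal (\<phi> s * I s powr r) * indicator {t<..<a} s)" for s
      proof (cases "s \<in> {t<..<a}")
        case True
        then have "\<phi> s > 0" "I s > 0" using phi_pos t by (auto intro!: I_pos')
        then show ?thesis by (simp add: ennreal_mult mult.assoc)
      qed simp
      show ?thesis unfolding eq using m1 m2 by measurable
    qed
    have KM: "(\<lambda>s. ennreal (\<psi> s * I s powr (-1/p)) * indicator {t<..<a} s) \<in> borel_measurable lborel"
      using t by (intro meas_restr continuous_intros continuous_on_subset[OF psi_cont_open]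
            continuous_on_subset[OF I_cont_open]) (use sub nz in auto)
    have K0nn: "0 \<le> \<psi> s * I s powr (-1/p)" if "s \<in> {t<..<a}" for s
    proof -
      have "\<psi> s > 0" using psi_pos[of s] that t by auto
      then show ?thesis by simp
    qed
    have Kint: "(\<integral>\<^sup>+ s. ennreal (\<psi> s * I s powr (-1/p)) * indicator {t<..<a} s \<partial>lborel) = ennreal Br"
      unfolding Br_def
      by (rule nn_integral_has_integral_lebesgue'[OF _ K0_has_integral[OF t]])
         (use K0nn in auto)
    have Xint: "(\<integral>\<^sup>+ s. ennreal (\<bar>g1 s\<bar>) * indicator {t<..<a} s \<partial>lborel) = ennreal X"
    proof -
      have "((\<lambda>s. \<bar>g1 s\<bar>) has_integral X) {t..a}" unfolding X_def using absint by auto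
      then have hX: "((\<lambda>s. \<bar>g1 s\<bar>) has_integral X) {t<..<a}" by (rule hi_open)
      show ?thesis by (intro nn_integral_has_integral_lebesgue'[OF _ hX]) auto
    qed
    have key: "X \<le> \<mu> / p * Ar + ((p-1)/p) * \<mu> powr (-1/(p-1)) * Br" if mu: "\<mu> > 0" for \<mu>
    proof -
      define c where "c = r * \<mu> powr (-1/(p-1))"
      have c0: "c \<ge> 0" using r_pos by (simp add: c_def)
      have mp0: "\<mu> / p \<ge> 0" using mu p_gt by simp
      have "ennreal X = (\<integral>\<^sup>+ s. ennreal (\<bar>g1 s\<bar>) * indicator {t<..<a} s \<partial>lborel)" using Xint by simp
      also have "... \<le> (\<integral>\<^sup>+ s. ennreal (\<mu> / p) * (ennreal (\<bar>g1 s\<bar> powr p * (\<phi> s * I s powr r)) * indicator {t<..<a} s)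
            + ennreal c * (ennreal (\<psi> s * I s powr (-1/p)) * indicator {t<..<a} s) \<partial>lborel)"
      proof (rule nn_integral_mono)
        fix s
        show "ennreal (\<bar>g1 s\<bar>) * indicator {t<..<a} s \<le> ennreal (\<mu> / p) * (ennreal (\<bar>g1 s\<bar> powr p * (\<phi> s * I s powr r)) * indicator {t<..<a} s)
            + ennreal c * (ennreal (\<psi> s * I s powr (-1/p)) * indicator {t<..<a} s)"
        proof (cases "s \<in> {t<..<a}")
          case True
          have sp: "\<phi> s > 0" "I s > 0" using True phi_pos t by (auto intro!: I_pos')
          have y: "\<bar>g1 s\<bar> \<le> \<mu> / p * (\<bar>g1 s\<bar> powr p * \<phi> s * I s powr ((p-1)/p))
             + ((p-1)/p) * \<mu> powr (-1/(p-1)) * (\<phi> s powr (-1/(p-1)) * I s powr (-1/p))"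
            by (rule young_pt[OF p_gt _ sp mu]) simp
          have n1: "\<bar>g1 s\<bar> powr p * (\<phi> s * I s powr r) \<ge> 0" using sp by simp
          have n2: "\<psi> s * I s powr (-1/p) \<ge> 0" using psi_pos[of s] True t by simp
          have "\<bar>g1 s\<bar> \<le> \<mu> / p * (\<bar>g1 s\<bar> powr p * (\<phi> s * I s powr r)) + c * (\<psi> s * I s powr (-1/p))"
            using y by (simp add: c_def r_def \<psi>_def mult.assoc)
          then have "ennreal (\<bar>g1 s\<bar>) \<le> ennreal (\<mu> / p * (\<bar>g1 s\<bar> powr p * (\<phi> s * I s powr r)) + c * (\<psi> s * I s powr (-1/p)))"
            by (rule ennreal_leI)
          also have "... = ennreal (\<mu> / p) * ennreal (\<bar>g1 s\<bar> powr p * (\<phi> s * I s powr r)) + ennreal c * ennreal (\<psi> s * I s powr (-1/p))"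
          proof -
            have "0 \<le> \<mu> / p * (\<bar>g1 s\<bar> powr p * (\<phi> s * I s powr r))" using mp0 n1 by (rule mult_nonneg_nonneg)
            moreover have "0 \<le> c * (\<psi> s * I s powr (-1/p))" using c0 n2 by (rule mult_nonneg_nonneg)
            ultimately show ?thesis
              by (simp only: ennreal_plus ennreal_mult[OF mp0 n1] ennreal_mult[OF c0 n2])
          qed
          finally show ?thesis using True by simp
        qed simp
      qed
      also have "... = ennreal (\<mu> / p) * ?\<Phi> + ennreal c * (\<integral>\<^sup>+ s. ennreal (\<psi> s * I s powr (-1/p)) * indicator {t<..<a} s \<partial>lborel)"
        using FM KM by (simp add: nn_integral_add nn_integral_cmult)
      also have "... = ennreal (\<mu> / p) * ennreal Ar + ennreal c * ennreal Br"
        using Ar Kint by simp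
      also have "... = ennreal (\<mu> / p * Ar + c * Br)"
      proof -
        have Br0: "Br \<ge> 0" using Brp by simp
        have "0 \<le> \<mu> / p * Ar" using mp0 Ar(1) by (rule mult_nonneg_nonneg)
        moreover have "0 \<le> c * Br" using c0 Br0 by (rule mult_nonneg_nonneg)
        ultimately show ?thesis
          by (simp only: ennreal_plus ennreal_mult[OF mp0 Ar(1)] ennreal_mult[OF c0 Br0])
      qed
      finally have "ennreal X \<le> ennreal (\<mu> / p * Ar + c * Br)" .
      moreover have nn: "0 \<le> \<mu> / p * Ar + c * Br"
        using mp0 c0 Brp Ar(1) by (intro add_nonneg_nonneg mult_nonneg_nonneg) auto
      ultimately have "X \<le> \<mu> / p * Ar + c * Br"
        using ennreal_le_iff[OF nn] by blast
      then show ?thesis by (simp add: c_def r_def)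
    qed
    have XP: "X powr p \<le> Ar * Br powr (p-1)"
      by (rule opt_lemma[OF p_gt X0 Ar(1) Brp key])
    have "\<bar>u t\<bar> powr p \<le> X powr p" using ut p_gt by (intro powr_mono2) (auto simp: X_def)
    then have "\<bar>u t\<bar> powr p \<le> Ar * Br powr (p-1)" using XP by linarith
    then have "\<bar>u t\<bar> powr p * (\<psi> t * I t powr (-p)) \<le> Ar * Br powr (p-1) * (\<psi> t * I t powr (-p))"
      using psi_pos[of t] t by (intro mult_right_mono) auto
    also have "... = Ar * k t" using kalg[OF Ip] by (simp add: Br_def algebra_simps)
    finally have "\<bar>u t\<bar> powr p * \<psi> t * I t powr (-p) \<le> k t * Ar" by (simp add: algebra_simps)
    then have "ennreal (\<bar>u t\<bar> powr p * \<psi> t * I t powr (-p)) \<le> ennreal (k t * Ar)" by (rule ennreal_leI)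
    also have "... = ennreal (k t) * ?\<Phi>" using Ar kp by (simp add: ennreal_mult)
    finally show ?thesis .
  qed
qed

end



context hardy begin

lemma pair_less_sets: "{(x::real, y). x < y} \<in> sets (lborel \<Otimes>\<^sub>M lborel)"
  unfolding lborel_prod
proof -
  have "open {z::real\<times>real. fst z < snd z}"
    by (intro open_Collect_less continuous_intros)
  then have "{z::real\<times>real. fst z < snd z} \<in> sets borel" by auto
  moreover have "{(x::real, y). x < y} = {z::real\<times>real. fst z < snd z}" by auto
  ultimately show "{(x::real, y). x < y} \<in> sets lborel" by simp
qed

lemma partB:
  assumes T: "T \<in> {0<..<a}" and Tpos: "\<forall>t\<in>{T<..<a}. \<exists>d. (\<eta> has_real_derivative d) (at t) \<and> d > 0"
    and E: "in_E a p \<phi> u g"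
  shows "energy a p \<phi> g \<ge> ennreal (((p - 1) / p) powr p) * weighted_rhs a p \<phi> (eta_aT \<phi> p a T) u"
proof -
  have gi: "\<forall>x\<in>{0<..a}. g absolutely_integrable_on {x..a}"
    and ud: "\<And>x y. 0 < x \<Longrightarrow> x \<le> y \<Longrightarrow> y \<le> a \<Longrightarrow> u y - u x = integral {x..y} g"
    and ua: "u a = 0"
    using E by (auto simp: in_E_def weak_deriv_on_def)
  obtain g1 N where g1m: "g1 \<in> borel_measurable borel" and N: "N \<in> null_sets lborel"
    and g1eq: "\<And>x. x \<in> {0<..<a} - N \<Longrightarrow> g1 x = g x" and g1z: "\<And>x. x \<notin> {0<..<a} - N \<Longrightarrow> g1 x = 0"
    using borel_version[OF a_pos gi] by blast
  have negN: "negligible (N \<union> {a})"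
  proof -
    have "N \<in> null_sets lebesgue" using N by (rule null_sets_completionI)
    then have "negligible N" by (simp add: negligible_iff_null_sets)
    then show ?thesis by (intro negligible_Un) auto
  qed
  have eqT: "g1 x = g x" if "x \<in> {t..a} - (N \<union> {a})" "0 < t" for x t
    using that by (intro g1eq) auto
  have g1i: "g1 absolutely_integrable_on {t..a}" if t: "t \<in> {0<..<a}" for t
  proof -
    have "g absolutely_integrable_on {t..a}" using gi t by auto
    then show ?thesis by (rule absolutely_integrable_spike[OF _ negN]) (use eqT t in auto)
  qed
  have ut: "\<bar>u t\<bar> \<le> integral {t..a} (\<lambda>s. \<bar>g1 s\<bar>)" if t: "t \<in> {0<..<a}" for t
  proof -
    have "integral {t..a} g = integral {t..a} g1"
      by (rule integral_spike[OF negN]) (use eqT t in auto)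
    moreover have "u a - u t = integral {t..a} g" using ud t by auto
    ultimately have "\<bar>u t\<bar> = norm (integral {t..a} g1)" using ua by simp
    also have "... \<le> integral {t..a} (\<lambda>s. \<bar>g1 s\<bar>)"
      using g1i[OF t] by (intro integral_norm_bound_integral) (auto simp: absolutely_integrable_on_def)
    finally show ?thesis .
  qed
  define F0 where "F0 s = \<bar>g1 s\<bar> powr p * (\<phi> s * I s powr r)" for s
  define \<Phi> where "\<Phi> t = (\<integral>\<^sup>+ s. ennreal (F0 s) * indicator {t<..<a} s \<partial>lborel)" for t
  define H where "H t s = ennreal (k t) * indicator {0<..<a} t * (ennreal (F0 s) * indicator {t<..<a} s)" for t s
  have wcont: "continuous_on {0<..<a} (\<lambda>s. \<phi> s * I s powr r)"
    by (intro continuous_intros continuous_on_subset[OF phi_cont'] I_cont_open) (auto, metis I_pos' greaterThanLessThan_iff less_irrefl)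
  have wm: "(\<lambda>s. ennreal (\<phi> s * I s powr r) * indicator {0<..<a} s) \<in> borel_measurable lborel"
    by (rule meas_restr[OF wcont]) auto
  have gpm: "(\<lambda>s. ennreal (\<bar>g1 s\<bar> powr p)) \<in> borel_measurable lborel"
    using g1m by measurable
  have km: "(\<lambda>s. ennreal (k s) * indicator {0<..<a} s) \<in> borel_measurable lborel"
    by (rule meas_restr[OF k_cont]) auto
  have F0split: "ennreal (F0 s) * indicator {t<..<a} s =
       ennreal (\<bar>g1 s\<bar> powr p) * (ennreal (\<phi> s * I s powr r) * indicator {0<..<a} s) * indicator {t<..<a} s"
    if "t \<ge> 0" for t s
  proof (cases "s \<in> {t<..<a}")
    case True
    then have "\<phi> s > 0" "s \<in> {0<..<a}" using phi_pos that by auto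
    then show ?thesis using True by (simp add: F0_def ennreal_mult)
  qed simp
  have Hsplit: "H t s = (ennreal (k t) * indicator {0<..<a} t) *
       (ennreal (\<bar>g1 s\<bar> powr p) * (ennreal (\<phi> s * I s powr r) * indicator {0<..<a} s)) * indicator {(x, y). x < y} (t, s)"
    for t s
  proof (cases "t \<in> {0<..<a}")
    case True
    then show ?thesis unfolding H_def using F0split[of t s]
      by (auto simp: indicator_def mult.assoc)
  qed (simp add: H_def)
  have Hm: "(\<lambda>(t, s). H t s) \<in> borel_measurable (lborel \<Otimes>\<^sub>M lborel)"
  proof -
    have "(\<lambda>z. indicator {(x::real, y). x < y} z :: ennreal) \<in> borel_measurable (lborel \<Otimes>\<^sub>M lborel)"
      using pair_less_sets by (rule borel_measurable_indicator)
    then show ?thesis unfolding Hsplit case_prod_beta using km gpm wm by measurable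
  qed
  have stepW: "weighted_rhs a p \<phi> (eta_aT \<phi> p a T) u \<le> (\<integral>\<^sup>+ t. ennreal (k t) * \<Phi> t * indicator {0<..<a} t \<partial>lborel)"
    unfolding weighted_rhs_def
  proof (rule nn_integral_mono)
    fix t
    show "ennreal (\<bar>u t\<bar> powr p * eta_aT \<phi> p a T t powr p * \<phi> t) * indicator {0<..<a} t
          \<le> ennreal (k t) * \<Phi> t * indicator {0<..<a} t"
    proof (cases "t \<in> {0<..<a}")
      case True
      have eb: "0 \<le> eta_aT \<phi> p a T t" "eta_aT \<phi> p a T t \<le> \<eta> t" using etaT_bounds[OF T Tpos True] by auto
      have Ip: "I t > 0" using I_pos[OF True] .
      have ph: "\<phi> t > 0" using phi_pos True by auto
      have "eta_aT \<phi> p a T t powr p \<le> \<eta> t powr p" using eb p_gt by (intro powr_mono2) auto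
      then have "\<bar>u t\<bar> powr p * eta_aT \<phi> p a T t powr p * \<phi> t \<le> \<bar>u t\<bar> powr p * \<eta> t powr p * \<phi> t"
        using ph by (intro mult_right_mono mult_left_mono) auto
      also have "\<eta> t powr p * \<phi> t = \<psi> t * I t powr (-p)"
      proof -
        have "\<eta> t powr p * \<phi> t = (\<psi> t powr p * \<phi> t) / I t powr p"
          using Ip psi_pos[of t] True by (simp add: \<eta>_def powr_divide)
        also have "... = \<psi> t * I t powr (-p)" using True by (simp add: psi_p_phi powr_minus_divide)
        finally show ?thesis .
      qed
      then have "\<bar>u t\<bar> powr p * \<eta> t powr p * \<phi> t = \<bar>u t\<bar> powr p * \<psi> t * I t powr (-p)"
        by (simp add: mult.assoc)
      finally have "ennreal (\<bar>u t\<bar> powr p * eta_aT \<phi> p a T t powr p * \<phi> t) \<le> ennreal (\<bar>u t\<bar> powr p * \<psi> t * I t powr (-p))"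
        by (rule ennreal_leI)
      also have "... \<le> ennreal (k t) * \<Phi> t"
        unfolding \<Phi>_def F0_def by (rule hardy_pt[where u=u and t=t, OF g1m g1i[OF True] ut[OF True] True])
      finally show ?thesis using True by simp
    qed simp
  qed
  have stepF: "(\<integral>\<^sup>+ t. ennreal (k t) * \<Phi> t * indicator {0<..<a} t \<partial>lborel) = (\<integral>\<^sup>+ t. (\<integral>\<^sup>+ s. H t s \<partial>lborel) \<partial>lborel)"
  proof (rule nn_integral_cong)
    fix t :: real
    show "ennreal (k t) * \<Phi> t * indicator {0<..<a} t = (\<integral>\<^sup>+ s. H t s \<partial>lborel)"
    proof (cases "t \<in> {0<..<a}")
      case True
      have m: "(\<lambda>s. ennreal (F0 s) * indicator {t<..<a} s) \<in> borel_measurable lborel"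
      proof -
        have im: "(\<lambda>s. indicator {t<..<a} s :: ennreal) \<in> borel_measurable lborel"
          by (intro borel_measurable_indicator) simp
        have eqs: "(\<lambda>s. ennreal (F0 s) * indicator {t<..<a} s) = (\<lambda>s. ennreal (\<bar>g1 s\<bar> powr p) * (ennreal (\<phi> s * I s powr r) * indicator {0<..<a} s) * indicator {t<..<a} s)"
          using F0split[of t] True by auto
        show ?thesis unfolding eqs using im gpm wm by measurable
      qed
      show ?thesis using True unfolding H_def \<Phi>_def
        by (simp add: nn_integral_cmult[OF m] mult.assoc)
    qed (simp add: H_def)
  qed
  have stepFub: "(\<integral>\<^sup>+ t. (\<integral>\<^sup>+ s. H t s \<partial>lborel) \<partial>lborel) = (\<integral>\<^sup>+ s. (\<integral>\<^sup>+ t. H t s \<partial>lborel) \<partial>lborel)"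
    using lborel_pair.Fubini'[OF Hm] by simp
  have stepS: "(\<integral>\<^sup>+ t. H t s \<partial>lborel) \<le> ennreal (r powr (-p)) * (ennreal (\<bar>g1 s\<bar> powr p * \<phi> s) * indicator {0<..<a} s)" for s
  proof (cases "s \<in> {0<..<a}")
    case True
    have Is: "I s > 0" using I_pos[OF True] .
    have ph: "\<phi> s > 0" using phi_pos True by auto
    have F0n: "F0 s \<ge> 0" using ph by (simp add: F0_def)
    have "(\<integral>\<^sup>+ t. H t s \<partial>lborel) = (\<integral>\<^sup>+ t. ennreal (F0 s) * (ennreal (k t) * indicator {0<..<s} t) \<partial>lborel)"
      by (intro nn_integral_cong) (use True in \<open>auto simp: H_def indicator_def mult.commute\<close>)
    also have "... = ennreal (F0 s) * (\<integral>\<^sup>+ t. ennreal (k t) * indicator {0<..<s} t \<partial>lborel)"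
    proof (rule nn_integral_cmult)
      show "(\<lambda>t. ennreal (k t) * indicator {0<..<s} t) \<in> borel_measurable lborel"
        using True by (intro meas_restr continuous_on_subset[OF k_cont]) auto
    qed
    also have "... \<le> ennreal (F0 s) * ennreal (r powr (-p) * I s powr (-r))"
      by (intro mult_left_mono k_bound True) auto
    also have "... = ennreal (F0 s * (r powr (-p) * I s powr (-r)))"
      using F0n r_pos by (simp add: ennreal_mult)
    also have "F0 s * (r powr (-p) * I s powr (-r)) = r powr (-p) * (\<bar>g1 s\<bar> powr p * \<phi> s)"
    proof -
      have "I s powr r * I s powr (-r) = 1" using Is by (simp add: powr_add[symmetric])
      then show ?thesis by (simp add: F0_def algebra_simps)
    qed
    also have "ennreal (r powr (-p) * (\<bar>g1 s\<bar> powr p * \<phi> s)) = ennreal (r powr (-p)) * (ennreal (\<bar>g1 s\<bar> powr p * \<phi> s) * indicator {0<..<a} s)"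
      using True ph by (simp add: ennreal_mult)
    finally show ?thesis .
  next
    case False
    have "H t s = 0" for t using False by (auto simp: H_def indicator_def)
    then show ?thesis by simp
  qed
  have en1: "energy a p \<phi> g1 \<le> energy a p \<phi> g"
    unfolding energy_def
  proof (rule nn_integral_mono)
    fix s
    show "ennreal (\<bar>g1 s\<bar> powr p * \<phi> s) * indicator {0<..<a} s \<le> ennreal (\<bar>g s\<bar> powr p * \<phi> s) * indicator {0<..<a} s"
    proof (cases "s \<in> {0<..<a}")
      case True
      have ph: "\<phi> s > 0" using phi_pos True by auto
      show ?thesis
      proof (cases "s \<in> N")
        case True
        then have "g1 s = 0" using g1z by auto
        then show ?thesis using ph by simp
      next
        case False
        then show ?thesis using g1eq \<open>s \<in> {0<..<a}\<close> by simp
      qed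
    qed simp
  qed
  have em: "(\<lambda>s. ennreal (\<bar>g1 s\<bar> powr p * \<phi> s) * indicator {0<..<a} s) \<in> borel_measurable lborel"
  proof -
    have pm: "(\<lambda>s. ennreal (\<phi> s) * indicator {0<..<a} s) \<in> borel_measurable lborel"
      by (rule meas_restr continuous_on_subset[OF phi_cont'])+ auto
    have eq: "ennreal (\<bar>g1 s\<bar> powr p * \<phi> s) * indicator {0<..<a} s
        = ennreal (\<bar>g1 s\<bar> powr p) * (ennreal (\<phi> s) * indicator {0<..<a} s)" for s
    proof (cases "s \<in> {0<..<a}")
      case True
      then have "\<phi> s > 0" using phi_pos by auto
      then show ?thesis using True by (simp add: ennreal_mult)
    qed simp
    show ?thesis unfolding eq using gpm pm by measurable
  qed
  have "weighted_rhs a p \<phi> (eta_aT \<phi> p a T) u \<le> (\<integral>\<^sup>+ s. (\<integral>\<^sup>+ t. H t s \<partial>lborel) \<partial>lborel)"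
    using stepW stepF stepFub by simp
  also have "... \<le> (\<integral>\<^sup>+ s. ennreal (r powr (-p)) * (ennreal (\<bar>g1 s\<bar> powr p * \<phi> s) * indicator {0<..<a} s) \<partial>lborel)"
    by (intro nn_integral_mono stepS)
  also have "... = ennreal (r powr (-p)) * energy a p \<phi> g1"
    unfolding energy_def by (rule nn_integral_cmult[OF em])
  also have "... \<le> ennreal (r powr (-p)) * energy a p \<phi> g"
    by (intro mult_left_mono en1) auto
  finally have W: "weighted_rhs a p \<phi> (eta_aT \<phi> p a T) u \<le> ennreal (r powr (-p)) * energy a p \<phi> g" .
  have "ennreal (r powr p) * weighted_rhs a p \<phi> (eta_aT \<phi> p a T) u \<le> ennreal (r powr p) * (ennreal (r powr (-p)) * energy a p \<phi> g)"
    by (intro mult_left_mono W) auto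
  also have "... = ennreal (r powr p * r powr (-p)) * energy a p \<phi> g"
    by (simp add: ennreal_mult mult.assoc)
  also have "r powr p * r powr (-p) = 1" using r_pos by (simp add: powr_add[symmetric])
  finally show ?thesis by (simp add: r_def)
qed

end



context hardy begin

lemma eta_p_phi: "t \<in> {0<..<a} \<Longrightarrow> \<eta> t powr p * \<phi> t = \<psi> t * I t powr (-p)"
proof -
  assume True: "t \<in> {0<..<a}"
  have Ip: "I t > 0" using I_pos[OF True] .
  have "\<eta> t powr p * \<phi> t = (\<psi> t powr p * \<phi> t) / I t powr p"
    using Ip psi_pos[of t] True by (simp add: \<eta>_def powr_divide)
  also have "... = \<psi> t * I t powr (-p)" using True by (simp add: psi_p_phi powr_minus_divide)
  finally show ?thesis .
qed

lemma I_unbdd: assumes x: "0 < x" "x \<le> a" shows "\<exists>t\<in>{0<..<x}. I t > K"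
proof -
  define K' where "K' = max K 0"
  define Y where "Y = K' * \<epsilon> / A + a powr (-\<epsilon>) + 1"
  have "K' * \<epsilon> / A \<ge> 0" using A_pos eps_pos by (simp add: K'_def)
  moreover have "a powr (-\<epsilon>) \<ge> 0" by simp
  ultimately have Yp: "Y > 0" unfolding Y_def by linarith
  define t where "t = min (x/2) (Y powr (-1/\<epsilon>))"
  have tp: "t > 0" using x Yp by (simp add: t_def)
  have tx: "t < x" using x by (simp add: t_def)
  have "t \<le> Y powr (-1/\<epsilon>)" by (simp add: t_def)
  then have "(Y powr (-1/\<epsilon>)) powr (-\<epsilon>) \<le> t powr (-\<epsilon>)"
    using tp eps_pos by (intro powr_mono2') auto
  moreover have "(Y powr (-1/\<epsilon>)) powr (-\<epsilon>) = Y"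
    using Yp eps_pos by (simp add: powr_powr)
  ultimately have tY: "Y \<le> t powr (-\<epsilon>)" by simp
  have "A * ((t powr (-\<epsilon>) - a powr (-\<epsilon>))/\<epsilon>) \<le> I t" using I_bounds[of t] tp tx x by auto
  moreover have "A * ((t powr (-\<epsilon>) - a powr (-\<epsilon>))/\<epsilon>) \<ge> A * ((K' * \<epsilon> / A + 1)/\<epsilon>)"
    using tY A_pos eps_pos by (intro mult_left_mono divide_right_mono) (auto simp: Y_def)
  moreover have "A * ((K' * \<epsilon> / A + 1)/\<epsilon>) = K' + A / \<epsilon>"
    using A_pos eps_pos by (simp add: field_simps)
  moreover have "K' + A / \<epsilon> > K"
  proof -
    have "A / \<epsilon> > 0" using A_pos eps_pos by simp
    moreover have "K \<le> K'" by (simp add: K'_def)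
    ultimately show ?thesis by linarith
  qed
  ultimately have "I t > K" by linarith
  then show ?thesis using tp tx by auto
qed

lemma I_powr_deriv: "t \<in> {0<..<a} \<Longrightarrow> ((\<lambda>s. I s powr b) has_real_derivative b * I t powr (b - 1) * (- \<psi> t)) (at t)"
  using DERIV_fun_powr[OF I_deriv I_pos, of t b] by simp

lemma I_powr_cont: "0 < c \<Longrightarrow> b > 0 \<Longrightarrow> continuous_on {c..a} (\<lambda>s. I s powr b)"
  using I_nonneg by (intro continuous_on_powr' I_cont_iv continuous_on_const) auto

lemma partC:
  assumes T: "T \<in> {0<..<a}" and C: "C > ((p - 1) / p) powr p"
  shows "\<exists>u g. in_E a p \<phi> u g \<and> energy a p \<phi> g < ennreal C * weighted_rhs a p \<phi> (eta_aT \<phi> p a T) u"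
proof -
  have Cr: "C > r powr p" using C by (simp add: r_def)
  have "r powr p > 0" using r_pos by simp
  then have Cp: "C > 0" using Cr by linarith
  define c where "c = C powr (1/p)"
  have rc: "r < c"
  proof -
    have "(r powr p) powr (1/p) < C powr (1/p)" using Cr r_pos p_gt by (intro powr_less_mono2) auto
    then show ?thesis using r_pos p_gt by (simp add: powr_powr c_def)
  qed
  define \<alpha> where "\<alpha> = (r + c) / 2"
  have ar: "r < \<alpha>" "\<alpha> < c" using rc by (auto simp: \<alpha>_def)
  have ap: "\<alpha> > 0" using ar r_pos by simp
  have aC: "\<alpha> powr p < C"
  proof -
    have "\<alpha> powr p < c powr p" using ar ap p_gt by (intro powr_less_mono2) auto
    also have "c powr p = C" using Cp p_gt by (simp add: c_def powr_powr)
    finally show ?thesis .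
  qed
  define e where "e = p * \<alpha> - p + 1"
  have ep: "e > 0"
  proof -
    have "p * r < p * \<alpha>" using ar p_gt by simp
    moreover have "p * r = p - 1" using p_gt by (simp add: r_def)
    ultimately show ?thesis by (simp add: e_def)
  qed
  define IT where "IT = I T"
  have ITp: "IT > 0" using I_pos[OF T] by (simp add: IT_def)
  define R where "R = max IT ((C * IT powr e / (C - \<alpha> powr p)) powr (1/e))"
  obtain tM where tM: "tM \<in> {0<..<T}" "I tM > R"
    using I_unbdd[of T R] T by auto
  define M where "M = I tM"
  have tMa: "tM \<in> {0<..<a}" using tM T by auto
  have MIT: "M > IT" using tM(2) by (simp add: M_def R_def)
  have Mp: "M > 0" using MIT ITp by simp
  have Mbig: "M powr e * (C - \<alpha> powr p) > C * IT powr e"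
  proof -
    have q0: "C * IT powr e / (C - \<alpha> powr p) \<ge> 0" using Cp aC by simp
    have "(C * IT powr e / (C - \<alpha> powr p)) powr (1/e) < M" using tM(2) by (simp add: M_def R_def)
    then have "((C * IT powr e / (C - \<alpha> powr p)) powr (1/e)) powr e < M powr e"
      using ep by (intro powr_less_mono2) auto
    moreover have "((C * IT powr e / (C - \<alpha> powr p)) powr (1/e)) powr e = C * IT powr e / (C - \<alpha> powr p)"
    proof -
      have gen: "(Q powr (1/e)) powr e = Q" if "Q \<ge> 0" for Q using that ep by (simp add: powr_powr)
      show ?thesis by (rule gen[OF q0])
    qed
    ultimately have "C * IT powr e / (C - \<alpha> powr p) < M powr e" by simp
    then show ?thesis using aC by (simp add: divide_less_eq)
  qed
  define u where "u t = (if t \<le> tM then M powr \<alpha> else I t powr \<alpha>)" for t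
  define g where "g t = (if t \<le> tM then 0 else - (\<alpha> * I t powr (\<alpha> - 1) * \<psi> t))" for t
  have Imono: "I t \<le> I s" if "0 < s" "s \<le> t" "t \<le> a" for s t using I_mono that by blast
  have umin: "u t = min (I t) M powr \<alpha>" if "t \<in> {0<..a}" for t
  proof (cases "t \<le> tM")
    case True
    then have "I tM \<le> I t" using that tMa by (intro Imono) auto
    then show ?thesis using True by (simp add: u_def M_def)
  next
    case False
    then have "I t \<le> I tM" using that tMa by (intro Imono) auto
    then show ?thesis using False by (simp add: u_def M_def)
  qed
  have ucont: "continuous_on {x..a} u" if "0 < x" for x
  proof -
    have "continuous_on {x..a} (\<lambda>t. min (I t) M powr \<alpha>)"
      using that I_nonneg Mp ap
      by (intro continuous_on_powr' continuous_on_min I_cont_iv continuous_on_const) auto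
    then show ?thesis by (rule continuous_on_eq) (use that umin in auto)
  qed
  have gnp: "g t \<le> 0" if "t \<in> {0<..a}" for t
    using that psi_pos[of t] ap by (auto simp: g_def)
  have uderiv: "(u has_real_derivative g t) (at t)" if "t \<in> {0<..<a}" "t \<noteq> tM" for t
  proof (cases "t < tM")
    case True
    have d0: "((\<lambda>_. M powr \<alpha>) has_real_derivative 0) (at t)" by simp
    have "(u has_real_derivative 0) (at t)"
      by (rule has_field_derivative_transform_within_open[OF d0, of "{..<tM}"])
         (use True in \<open>auto simp: u_def\<close>)
    moreover have "g t = 0" using True by (simp add: g_def)
    ultimately show ?thesis by simp
  next
    case False
    then have tt: "tM < t" using that by simp
    have "((\<lambda>s. I s powr \<alpha>) has_real_derivative \<alpha> * I t powr (\<alpha> - 1) * (- \<psi> t)) (at t)"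
      by (rule I_powr_deriv[OF that(1)])
    then have "((\<lambda>s. I s powr \<alpha>) has_real_derivative g t) (at t)" using tt by (simp add: g_def)
    then show ?thesis
      by (rule has_field_derivative_transform_within_open[of _ _ _ "{tM<..}"])
         (use tt in \<open>auto simp: u_def\<close>)
  qed
  have ghas: "(g has_integral (u y - u x)) {x..y}" if xy: "0 < x" "x \<le> y" "y \<le> a" for x y
  proof (rule fundamental_theorem_of_calculus_interior_strong[of "{tM}"])
    show "finite {tM}" by simp
    show "x \<le> y" by fact
    show "continuous_on {x..y} u" by (rule continuous_on_subset[OF ucont[OF xy(1)]]) (use xy in auto)
    fix t assume t: "t \<in> {x<..<y} - {tM}"
    then have "t \<in> {0<..<a}" "t \<noteq> tM" using xy by auto
    then show "(u has_vector_derivative g t) (at t)"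
      using uderiv has_real_derivative_iff_has_vector_derivative by blast
  qed
  have gabs: "g absolutely_integrable_on {x..a}" if "x \<in> {0<..a}" for x
  proof -
    have gint: "g integrable_on {x..a}" using ghas[of x a] that by auto
    have "(\<lambda>t. - g t) integrable_on {x..a}" using integrable_neg[OF gint] by simp
    then have "(\<lambda>t. \<bar>g t\<bar>) integrable_on {x..a}"
      by (rule integrable_eq) (use that gnp in auto)
    then show ?thesis using gint by (simp add: absolutely_integrable_on_def)
  qed
  have ua: "u a = 0" using tMa by (simp add: u_def I_a)
  have Ehas: "((\<lambda>t. \<alpha> powr p * I t powr (e - 1) * \<psi> t) has_integral (\<alpha> powr p * M powr e / e)) {tM<..<a}"
  proof -
    have "((\<lambda>t. \<alpha> powr p * I t powr (e - 1) * \<psi> t) has_integral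
        ((\<lambda>t. - (\<alpha> powr p / e) * I t powr e) a - (\<lambda>t. - (\<alpha> powr p / e) * I t powr e) tM)) {tM..a}"
    proof (rule fundamental_theorem_of_calculus_interior)
      show "tM \<le> a" using tMa by simp
      show "continuous_on {tM..a} (\<lambda>t. - (\<alpha> powr p / e) * I t powr e)"
        using tMa ep by (intro continuous_intros I_powr_cont) auto
      fix t assume t: "t \<in> {tM<..<a}"
      then have tin: "t \<in> {0<..<a}" using tMa by auto
      have "((\<lambda>t. - (\<alpha> powr p / e) * I t powr e) has_real_derivative - (\<alpha> powr p / e) * (e * I t powr (e - 1) * (- \<psi> t))) (at t)"
        by (intro DERIV_cmult I_powr_deriv tin)
      moreover have "- (\<alpha> powr p / e) * (e * I t powr (e - 1) * (- \<psi> t)) = \<alpha> powr p * I t powr (e - 1) * \<psi> t"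
        using ep by (simp add: field_simps)
      ultimately show "((\<lambda>t. - (\<alpha> powr p / e) * I t powr e) has_vector_derivative \<alpha> powr p * I t powr (e - 1) * \<psi> t) (at t)"
        by (simp add: has_real_derivative_iff_has_vector_derivative[symmetric])
    qed
    then show ?thesis using ep by (intro hi_open) (simp add: I_a M_def)
  qed
  have energy_eq: "energy a p \<phi> g = ennreal (\<alpha> powr p * M powr e / e)"
  proof -
    have "energy a p \<phi> g = (\<integral>\<^sup>+ t. ennreal (\<alpha> powr p * I t powr (e - 1) * \<psi> t) * indicator {tM<..<a} t \<partial>lborel)"
      unfolding energy_def
    proof (rule nn_integral_cong)
      fix t :: real
      show "ennreal (\<bar>g t\<bar> powr p * \<phi> t) * indicator {0<..<a} t = ennreal (\<alpha> powr p * I t powr (e - 1) * \<psi> t) * indicator {tM<..<a} t"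
      proof (cases "t \<in> {tM<..<a}")
        case True
        then have tin: "t \<in> {0<..<a}" using tMa by auto
        have Ip: "I t > 0" using I_pos[OF tin] .
        have ps: "\<psi> t > 0" using psi_pos[of t] tin by auto
        have "\<bar>g t\<bar> = \<alpha> * I t powr (\<alpha> - 1) * \<psi> t" using True ap ps by (simp add: g_def)
        then have "\<bar>g t\<bar> powr p * \<phi> t = \<alpha> powr p * (I t powr (\<alpha> - 1)) powr p * (\<psi> t powr p * \<phi> t)"
          using ap ps Ip by (simp add: powr_mult mult.assoc)
        also have "... = \<alpha> powr p * I t powr (e - 1) * \<psi> t"
        proof -
          have "(\<alpha> - 1) * p = e - 1" by (simp add: e_def algebra_simps)
          then have "(I t powr (\<alpha> - 1)) powr p = I t powr (e - 1)" by (simp add: powr_powr)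
          then show ?thesis using tin by (simp add: psi_p_phi)
        qed
        finally show ?thesis using True tin by simp
      next
        case False
        then show ?thesis using tMa by (auto simp: g_def indicator_def)
      qed
    qed
    also have "... = ennreal (\<alpha> powr p * M powr e / e)"
    proof (rule nn_integral_has_integral_lebesgue'[OF _ Ehas])
      fix t assume "t \<in> {tM<..<a}"
      then have "\<psi> t > 0" using psi_pos[of t] tMa by auto
      then show "0 \<le> \<alpha> powr p * I t powr (e - 1) * \<psi> t" by simp
    qed
    finally show ?thesis .
  qed
  have Whas: "((\<lambda>t. I t powr (e - 1) * \<psi> t) has_integral ((M powr e - IT powr e) / e)) {tM<..<T}"
  proof -
    have "((\<lambda>t. I t powr (e - 1) * \<psi> t) has_integral
        ((\<lambda>t. - (I t powr e / e)) T - (\<lambda>t. - (I t powr e / e)) tM)) {tM..T}"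
    proof (rule fundamental_theorem_of_calculus)
      show "tM \<le> T" using tM by simp
      fix t assume t: "t \<in> {tM..T}"
      then have tin: "t \<in> {0<..<a}" using tM T by auto
      have "((\<lambda>t. - (I t powr e / e)) has_real_derivative - ((e * I t powr (e - 1) * (- \<psi> t)) / e)) (at t)"
        by (intro DERIV_minus DERIV_cdivide I_powr_deriv tin)
      moreover have "- ((e * I t powr (e - 1) * (- \<psi> t)) / e) = I t powr (e - 1) * \<psi> t"
        using ep by simp
      ultimately show "((\<lambda>t. - (I t powr e / e)) has_vector_derivative I t powr (e - 1) * \<psi> t) (at t within {tM..T})"
        by (simp add: has_real_derivative_iff_has_vector_derivative[symmetric] has_field_derivative_at_within)
    qed
    then show ?thesis by (intro hi_open) (simp add: M_def IT_def diff_divide_distrib)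
  qed
  have wlow: "ennreal ((M powr e - IT powr e) / e) \<le> weighted_rhs a p \<phi> (eta_aT \<phi> p a T) u"
  proof -
    have "ennreal ((M powr e - IT powr e) / e) = (\<integral>\<^sup>+ t. ennreal (I t powr (e - 1) * \<psi> t) * indicator {tM<..<T} t \<partial>lborel)"
    proof (rule nn_integral_has_integral_lebesgue'[OF _ Whas, symmetric])
      fix t assume "t \<in> {tM<..<T}"
      then have "\<psi> t > 0" using psi_pos[of t] tM T by auto
      then show "0 \<le> I t powr (e - 1) * \<psi> t" by simp
    qed
    also have "... \<le> weighted_rhs a p \<phi> (eta_aT \<phi> p a T) u"
      unfolding weighted_rhs_def
    proof (rule nn_integral_mono)
      fix t
      show "ennreal (I t powr (e - 1) * \<psi> t) * indicator {tM<..<T} t \<le>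
            ennreal (\<bar>u t\<bar> powr p * eta_aT \<phi> p a T t powr p * \<phi> t) * indicator {0<..<a} t"
      proof (cases "t \<in> {tM<..<T}")
        case True
        then have tin: "t \<in> {0<..<a}" using tM T by auto
        have Ip: "I t > 0" using I_pos[OF tin] .
        have "\<bar>u t\<bar> powr p * eta_aT \<phi> p a T t powr p * \<phi> t = (I t powr \<alpha>) powr p * (\<eta> t powr p * \<phi> t)"
          using True by (simp add: u_def eta_aT_def eta_eq mult.assoc)
        also have "... = I t powr (\<alpha> * p) * (\<psi> t * I t powr (-p))" using eta_p_phi[OF tin] by (simp add: powr_powr)
        also have "... = I t powr (e - 1) * \<psi> t"
        proof -
          have "\<alpha> * p + (-p) = e - 1" by (simp add: e_def algebra_simps)
          then have "I t powr (\<alpha> * p) * I t powr (-p) = I t powr (e - 1)" by (simp add: powr_add[symmetric])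
          then show ?thesis by (simp add: algebra_simps)
        qed
        finally show ?thesis using True tin by simp
      qed simp
    qed
    finally show ?thesis .
  qed
  have inE: "in_E a p \<phi> u g"
  proof -
    have uint: "u absolutely_integrable_on {0..a}"
    proof (rule nonnegative_absolutely_integrable_1)
      have i1: "u integrable_on {0..tM}"
        by (rule integrable_eq[OF integrable_const_ivl[of "M powr \<alpha>" 0 tM]]) (auto simp: u_def)
      have i2: "u integrable_on {tM..a}"
        by (rule integrable_continuous_interval[OF ucont]) (use tMa in auto)
      show "u integrable_on {0..a}" by (rule Henstock_Kurzweil_Integration.integrable_combine[OF _ _ i1 i2]) (use tMa in auto)
      show "\<And>x. x \<in> {0..a} \<Longrightarrow> 0 \<le> u x" by (simp add: u_def)
    qed
    have wd: "weak_deriv_on a u g"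
      unfolding weak_deriv_on_def
    proof (intro conjI ballI allI impI)
      fix x assume "x \<in> {0<..a}" then show "g absolutely_integrable_on {x..a}" by (rule gabs)
    next
      fix x y :: real assume "0 < x" "x \<le> y" "y \<le> a"
      then show "u y - u x = integral {x..y} g" using ghas by (metis integral_unique)
    qed
    show ?thesis unfolding in_E_def using uint wd ua energy_eq by simp
  qed
  have "energy a p \<phi> g = ennreal (\<alpha> powr p * M powr e / e)" by (rule energy_eq)
  also have "... < ennreal (C * ((M powr e - IT powr e) / e))"
  proof (rule ennreal_lessI)
    have "M powr e > IT powr e" using MIT ITp ep by (intro powr_less_mono2) auto
    then show "0 < C * ((M powr e - IT powr e) / e)" using Cp ep by simp
    have "\<alpha> powr p * M powr e < C * (M powr e - IT powr e)" using Mbig by (simp add: algebra_simps)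
    then show "\<alpha> powr p * M powr e / e < C * ((M powr e - IT powr e) / e)"
      using ep by (simp add: divide_strict_right_mono)
  qed
  also have "... = ennreal C * ennreal ((M powr e - IT powr e) / e)"
    using Cp by (simp only: ennreal_mult'[of C])
  also have "... \<le> ennreal C * weighted_rhs a p \<phi> (eta_aT \<phi> p a T) u"
    by (intro mult_left_mono wlow) auto
  finally show ?thesis using inE by blast
qed

end


theorem proposition2p5:
  fixes a p c1 c2 \<delta> :: real and \<phi> \<phi>' :: "real \<Rightarrow> real"
  assumes a_pos: "a > 0" and p_gt: "p > 1"
    and phi_cont: "continuous_on {0..a} \<phi>"
    and phi_C1: "\<forall>t\<in>{0<..a}. (\<phi> has_real_derivative \<phi>' t) (at t within {0<..a})"
    and phi'_cont: "continuous_on {0<..a} \<phi>'"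
    and phi0: "\<phi> 0 = 0"
    and phi_pos: "\<forall>t\<in>{0<..a}. \<phi> t > 0"
    and cpos: "c1 > 0" "c2 > 0" "\<delta> > 0"
    and bounds: "\<forall>t\<in>{0<..a}. c1 * t powr (p - 1 + \<delta>) \<le> \<phi> t \<and> \<phi> t \<le> c2 * t powr (p - 1 + \<delta>)"
    and twice: "\<forall>t\<in>{0<..<a}. \<phi>' differentiable (at t)"
    and logconc: "\<forall>t\<in>{0<..<a}. \<exists>d. ((\<lambda>s. \<phi>' s / \<phi> s) has_real_derivative d) (at t) \<and> d < 0"
  shows
    "(\<exists>!T. T \<in> {0<..<a} \<and>
        (\<forall>t\<in>{0<..<T}. \<exists>d. (eta_a \<phi> p a has_real_derivative d) (at t) \<and> d < 0) \<and>
        (\<forall>t\<in>{T<..<a}. \<exists>d. (eta_a \<phi> p a has_real_derivative d) (at t) \<and> d > 0))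
     \<and>
     (\<forall>T. T \<in> {0<..<a} \<and>
        (\<forall>t\<in>{0<..<T}. \<exists>d. (eta_a \<phi> p a has_real_derivative d) (at t) \<and> d < 0) \<and>
        (\<forall>t\<in>{T<..<a}. \<exists>d. (eta_a \<phi> p a has_real_derivative d) (at t) \<and> d > 0)
      \<longrightarrow>
        (\<forall>u g. in_E a p \<phi> u g \<longrightarrow>
           energy a p \<phi> g \<ge> ennreal (((p - 1) / p) powr p) * weighted_rhs a p \<phi> (eta_aT \<phi> p a T) u)
        \<and>
        (\<forall>C. C > ((p - 1) / p) powr p \<longrightarrow>
           (\<exists>u g. in_E a p \<phi> u g \<and>
              energy a p \<phi> g < ennreal C * weighted_rhs a p \<phi> (eta_aT \<phi> p a T) u)))"
proof -
  interpret H: hardy a p c1 c2 \<delta> \<phi> \<phi>'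
    using a_pos p_gt phi_cont phi_C1 phi'_cont phi_pos cpos bounds logconc by unfold_locales auto
  have e: "eta_a \<phi> p a = H.\<eta>" by (rule H.eta_eq)
  show ?thesis unfolding e
  proof (intro conjI allI impI)
    show "\<exists>!T. T \<in> {0<..<a} \<and>
        (\<forall>t\<in>{0<..<T}. \<exists>d. (H.\<eta> has_real_derivative d) (at t) \<and> d < 0) \<and>
        (\<forall>t\<in>{T<..<a}. \<exists>d. (H.\<eta> has_real_derivative d) (at t) \<and> d > 0)" by (rule H.partA)
  next
    fix T u g
    assume T: "T \<in> {0<..<a} \<and>
        (\<forall>t\<in>{0<..<T}. \<exists>d. (H.\<eta> has_real_derivative d) (at t) \<and> d < 0) \<and>
        (\<forall>t\<in>{T<..<a}. \<exists>d. (H.\<eta> has_real_derivative d) (at t) \<and> d > 0)"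
      and E: "in_E a p \<phi> u g"
    show "energy a p \<phi> g \<ge> ennreal (((p - 1) / p) powr p) * weighted_rhs a p \<phi> (eta_aT \<phi> p a T) u"
      using H.partB[of T u g] T E by blast
  next
    fix T C
    assume T: "T \<in> {0<..<a} \<and>
        (\<forall>t\<in>{0<..<T}. \<exists>d. (H.\<eta> has_real_derivative d) (at t) \<and> d < 0) \<and>
        (\<forall>t\<in>{T<..<a}. \<exists>d. (H.\<eta> has_real_derivative d) (at t) \<and> d > 0)"
      and C: "C > ((p - 1) / p) powr p"
    show "\<exists>u g. in_E a p \<phi> u g \<and> energy a p \<phi> g < ennreal C * weighted_rhs a p \<phi> (eta_aT \<phi> p a T) u"
      using H.partC[of T C] T C by blast
  qed
qed

end
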